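(* Let $p$ be a prime, let $h_1,h_2$ be relatively prime positive integers, $h=h_1+h_2$, and let $F$ be the 2-dimensional Lubin–Tate formal group over $\mathbb{Z}_p$ associated with $(h_1,h_2)$. Then its multiplication-by-$p$ endomorphism satisfies $$[p]_F(x_1,x_2)\equiv(px_1,px_2)\ \text{mod degree 2 terms}\quad\text{and}\quad [p]_F(x_1,x_2)\equiv\big(x_2^{p^{h_1}},x_1^{p^{h_2}}\big)\ \text{mod } p.$$ In particular $[p]_F$ belongs to the set $\mathcal{C}^{h_1,h_2}_{LT}$ of pairs $f(X)\in\mathbb{Z}_p[[x_1,x_2]]^2$ with $f(X)\equiv(px_1,px_2)$ mod degree 2 and $f(X)$ mod $p$ equal to $(x_1^{p^{h_1}},x_2^{p^{h_2}})$ or $(x_2^{p^{h_1}},x_1^{p^{h_2}})$.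
   Context: Let $L=(L_1,L_2)\in\mathbb{Q}_p[[x_1,x_2]]^2$ be given by $L_1=x_1+\sum_{k\ge1}p^{-2k}x_1^{p^{kh}}+\sum_{k\ge0}p^{-(2k+1)}x_2^{p^{h_1+kh}}$ and $L_2=x_2+\sum_{k\ge1}p^{-2k}x_2^{p^{kh}}+\sum_{k\ge0}p^{-(2k+1)}x_1^{p^{h_2+kh}}$. Its Jacobian at $0$ is the identity, so it has a compositional inverse $L^{-1}$, and the 2-dimensional Lubin–Tate formal group associated with $(h_1,h_2)$ is $F(X,Y)=L^{-1}(L(X)+L(Y))$, a 2-dimensional formal group with coefficients in $\mathbb{Z}_p$. The maps $[k]_F$ are defined by $[0]_F(X)=0$, $[1]_F(X)=X$, $[k]_F(X)=F(X,[k-1]_F(X))$ for $k\ge2$. *)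

theory Defs
  imports Complex_Main "HOL-Computational_Algebra.Primes"
begin

text \<open>Formal power series in two variables x1, x2 with rational coefficients,
  represented by their coefficient function: f i j is the coefficient of x1^i x2^j.
  All series in the statement (L, its inverse, F, [k]_F) have coefficients in
  the subfield Q of Q_p, so we work over Q; membership in Z_p for a rational
  number means p does not divide its denominator.\<close>

type_synonym ps2 = "nat \<Rightarrow> nat \<Rightarrow> rat"
type_synonym ps2pair = "ps2 \<times> ps2"

definition ps_zero :: ps2 where "ps_zero = (\<lambda>i j. 0)"
definition ps_one :: ps2 where "ps_one = (\<lambda>i j. if i = 0 \<and> j = 0 then 1 else 0)"
definition ps_X1 :: ps2 where "ps_X1 = (\<lambda>i j. if i = 1 \<and> j = 0 then 1 else 0)"
definition ps_X2 :: ps2 where "ps_X2 = (\<lambda>i j. if i = 0 \<and> j = 1 then 1 else 0)"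
definition ps_add :: "ps2 \<Rightarrow> ps2 \<Rightarrow> ps2" where "ps_add f g = (\<lambda>i j. f i j + g i j)"
definition ps_smult :: "rat \<Rightarrow> ps2 \<Rightarrow> ps2" where "ps_smult c f = (\<lambda>i j. c * f i j)"
definition ps_mult :: "ps2 \<Rightarrow> ps2 \<Rightarrow> ps2" where
  "ps_mult f g = (\<lambda>i j. \<Sum>a\<le>i. \<Sum>b\<le>j. f a b * g (i - a) (j - b))"
definition ps_pow :: "ps2 \<Rightarrow> nat \<Rightarrow> ps2" where
  "ps_pow f n = ((ps_mult f) ^^ n) ps_one"

text \<open>Substitution f(g1,g2), meaningful when g1, g2 have zero constant term:
  only monomials x1^a x2^b of f with a+b \<le> i+j contribute to the coefficient of x1^i x2^j.\<close>
definition ps_comp :: "ps2 \<Rightarrow> ps2 \<Rightarrow> ps2 \<Rightarrow> ps2" where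
  "ps_comp f g1 g2 = (\<lambda>i j. \<Sum>a\<le>i+j. \<Sum>b\<le>i+j. f a b * ps_mult (ps_pow g1 a) (ps_pow g2 b) i j)"

definition pp_X :: ps2pair where "pp_X = (ps_X1, ps_X2)"
definition pp_zero :: ps2pair where "pp_zero = (ps_zero, ps_zero)"
definition pp_add :: "ps2pair \<Rightarrow> ps2pair \<Rightarrow> ps2pair" where
  "pp_add F G = (ps_add (fst F) (fst G), ps_add (snd F) (snd G))"
definition pp_comp :: "ps2pair \<Rightarrow> ps2pair \<Rightarrow> ps2pair" where
  "pp_comp F G = (ps_comp (fst F) (fst G) (snd G), ps_comp (snd F) (fst G) (snd G))"

text \<open>The coefficient of x1^i x2^j collects the
  (finitely many, in fact at most one) terms of the defining infinite sums with
  this exponent; the bounds k \<le> i, k \<le> j are harmless since p^(kh) > k.\<close>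
definition LT_L1 :: "nat \<Rightarrow> nat \<Rightarrow> nat \<Rightarrow> ps2" where
  "LT_L1 p h1 h2 = (\<lambda>i j. let h = h1 + h2 in
      (if i = 1 \<and> j = 0 then 1 else 0)
    + (\<Sum>k\<in>{1..i}. if i = p ^ (k * h) \<and> j = 0 then 1 / of_nat p ^ (2 * k) else 0)
    + (\<Sum>k\<in>{0..j}. if i = 0 \<and> j = p ^ (h1 + k * h) then 1 / of_nat p ^ (2 * k + 1) else 0))"

definition LT_L2 :: "nat \<Rightarrow> nat \<Rightarrow> nat \<Rightarrow> ps2" where
  "LT_L2 p h1 h2 = (\<lambda>i j. let h = h1 + h2 in
      (if i = 0 \<and> j = 1 then 1 else 0)
    + (\<Sum>k\<in>{1..j}. if j = p ^ (k * h) \<and> i = 0 then 1 / of_nat p ^ (2 * k) else 0)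
    + (\<Sum>k\<in>{0..i}. if j = 0 \<and> i = p ^ (h2 + k * h) then 1 / of_nat p ^ (2 * k + 1) else 0))"

definition LT_L :: "nat \<Rightarrow> nat \<Rightarrow> nat \<Rightarrow> ps2pair" where
  "LT_L p h1 h2 = (LT_L1 p h1 h2, LT_L2 p h1 h2)"

definition LT_Linv :: "nat \<Rightarrow> nat \<Rightarrow> nat \<Rightarrow> ps2pair" where
  "LT_Linv p h1 h2 = (THE M. fst M 0 0 = 0 \<and> snd M 0 0 = 0 \<and> pp_comp (LT_L p h1 h2) M = pp_X)"

text \<open>F(A,B) = L^{-1}(L(A) + L(B)) for pairs A, B of series without constant term,
  i.e. the formal group law F(X,Y) = L^{-1}(L(X)+L(Y)) with X := A, Y := B substituted.\<close>
definition LT_F :: "nat \<Rightarrow> nat \<Rightarrow> nat \<Rightarrow> ps2pair \<Rightarrow> ps2pair \<Rightarrow> ps2pair" where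
  "LT_F p h1 h2 A B = pp_comp (LT_Linv p h1 h2) (pp_add (pp_comp (LT_L p h1 h2) A) (pp_comp (LT_L p h1 h2) B))"

fun LT_mult :: "nat \<Rightarrow> nat \<Rightarrow> nat \<Rightarrow> nat \<Rightarrow> ps2pair" where
  "LT_mult p h1 h2 0 = pp_zero"
| "LT_mult p h1 h2 (Suc 0) = pp_X"
| "LT_mult p h1 h2 (Suc (Suc k)) = LT_F p h1 h2 pp_X (LT_mult p h1 h2 (Suc k))"

definition p_integral :: "nat \<Rightarrow> rat \<Rightarrow> bool" where
  "p_integral p r \<longleftrightarrow> \<not> (int p dvd snd (quotient_of r))"

definition ps_p_integral :: "nat \<Rightarrow> ps2 \<Rightarrow> bool" where
  "ps_p_integral p f \<longleftrightarrow> (\<forall>i j. p_integral p (f i j))"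

definition pp_p_integral :: "nat \<Rightarrow> ps2pair \<Rightarrow> bool" where
  "pp_p_integral p F \<longleftrightarrow> ps_p_integral p (fst F) \<and> ps_p_integral p (snd F)"

definition ps_cong_mod_p :: "nat \<Rightarrow> ps2 \<Rightarrow> ps2 \<Rightarrow> bool" where
  "ps_cong_mod_p p f g \<longleftrightarrow> (\<forall>i j. p_integral p ((f i j - g i j) / of_nat p))"

definition pp_cong_mod_p :: "nat \<Rightarrow> ps2pair \<Rightarrow> ps2pair \<Rightarrow> bool" where
  "pp_cong_mod_p p F G \<longleftrightarrow> ps_cong_mod_p p (fst F) (fst G) \<and> ps_cong_mod_p p (snd F) (snd G)"

definition pp_cong_deg2 :: "ps2pair \<Rightarrow> ps2pair \<Rightarrow> bool" where
  "pp_cong_deg2 F G \<longleftrightarrow> (\<forall>i j. i + j < 2 \<longrightarrow> fst F i j = fst G i j \<and> snd F i j = snd G i j)"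

definition C_LT :: "nat \<Rightarrow> nat \<Rightarrow> nat \<Rightarrow> ps2pair set" where
  "C_LT p h1 h2 = {f. pp_p_integral p f
      \<and> pp_cong_deg2 f (ps_smult (of_nat p) ps_X1, ps_smult (of_nat p) ps_X2)
      \<and> (pp_cong_mod_p p f (ps_pow ps_X1 (p ^ h1), ps_pow ps_X2 (p ^ h2))
         \<or> pp_cong_mod_p p f (ps_pow ps_X2 (p ^ h1), ps_pow ps_X1 (p ^ h2)))}"

end

theory Submission
  imports Defs "HOL-Computational_Algebra.Formal_Power_Series"
begin

unbundle fps_syntax

type_synonym R = "rat fps fps"

definition emb :: "ps2 \<Rightarrow> R" where "emb f = Abs_fps (\<lambda>i. Abs_fps (\<lambda>j. f i j))"
definition c2 :: "R \<Rightarrow> ps2" where "c2 F = (\<lambda>i j. F $ i $ j)"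

lemma emb_nth[simp]: "emb f $ i $ j = f i j"
  by (simp add: emb_def)
lemma c2_emb[simp]: "c2 (emb f) = f"
  by (simp add: c2_def)
lemma emb_c2[simp]: "emb (c2 F) = F"
  by (intro fps_ext) (simp add: c2_def)
lemma emb_inj: "emb f = emb g \<Longrightarrow> f = g"
  by (metis c2_emb)
lemma R_eqI: "(\<And>i j. F $ i $ j = G $ i $ j) \<Longrightarrow> F = G"
  by (intro fps_ext) auto

abbreviation X1 :: R where "X1 \<equiv> fps_X"
definition X2 :: R where "X2 = fps_const fps_X"

lemma mono_nth: "(X1 ^ a * X2 ^ b) $ i $ j = (if i = a \<and> j = b then 1 else 0)"
  by (simp add: fps_X_power_mult_nth fps_const_power X2_def)

lemma X1_nth: "X1 $ i $ j = (if i = 1 \<and> j = 0 then 1 else 0)"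
  by simp
lemma X2_nth: "X2 $ i $ j = (if i = 0 \<and> j = 1 then 1 else 0)"
  by (simp add: X2_def)
lemma X1p_nth: "(X1 ^ a) $ i $ j = (if i = a \<and> j = 0 then 1 else 0)"
  by simp
lemma X2p_nth: "(X2 ^ b) $ i $ j = (if i = 0 \<and> j = b then 1 else 0)"
  by (simp add: fps_const_power X2_def)

definition sc :: "rat \<Rightarrow> R \<Rightarrow> R" where "sc c F = fps_const (fps_const c) * F"

lemma sc_nth[simp]: "sc c F $ i $ j = c * F $ i $ j"
  by (simp add: sc_def)

lemma R_mult_nth: "(F * G) $ i $ j = (\<Sum>a\<le>i. \<Sum>b\<le>j. F $ a $ b * G $ (i - a) $ (j - b))"
  by (simp add: fps_mult_nth fps_sum_nth atLeast0AtMost sum_distrib_left)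

lemma one_nth: "(1::R) $ i $ j = (if i = 0 \<and> j = 0 then 1 else 0)"
  by simp

lemma emb_ps_mult[simp]: "emb (ps_mult f g) = emb f * emb g"
  by (rule R_eqI) (simp add: ps_mult_def R_mult_nth)
lemma emb_ps_one[simp]: "emb ps_one = 1"
  by (rule R_eqI) (simp add: ps_one_def)
lemma emb_ps_zero[simp]: "emb ps_zero = 0"
  by (rule R_eqI) (simp add: ps_zero_def)
lemma emb_ps_pow[simp]: "emb (ps_pow f n) = emb f ^ n"
proof (induction n)
  case 0 then show ?case by (simp add: ps_pow_def)
next
  case (Suc n)
  have "ps_pow f (Suc n) = ps_mult f (ps_pow f n)" by (simp add: ps_pow_def)
  then show ?case using Suc by simp
qed
lemma emb_ps_add[simp]: "emb (ps_add f g) = emb f + emb g"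
  by (rule R_eqI) (simp add: ps_add_def)
lemma emb_ps_smult[simp]: "emb (ps_smult c f) = sc c (emb f)"
  by (rule R_eqI) (simp add: ps_smult_def)
lemma emb_ps_X1[simp]: "emb ps_X1 = X1"
  by (rule R_eqI) (simp add: ps_X1_def)
lemma emb_ps_X2[simp]: "emb ps_X2 = X2"
  by (rule R_eqI) (simp add: ps_X2_def X2_def)

definition ld :: "nat \<Rightarrow> R \<Rightarrow> bool" where
  "ld d F \<longleftrightarrow> (\<forall>i j. i + j < d \<longrightarrow> F $ i $ j = 0)"

lemma ld_0[simp]: "ld 0 F" by (simp add: ld_def)
lemma ld_zero[simp]: "ld d 0" by (simp add: ld_def)
lemma ld_mono: "ld d F \<Longrightarrow> e \<le> d \<Longrightarrow> ld e F" by (auto simp: ld_def)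
lemma ld_add: "ld d F \<Longrightarrow> ld d G \<Longrightarrow> ld d (F + G)" by (auto simp: ld_def)
lemma ld_diff: "ld d F \<Longrightarrow> ld d G \<Longrightarrow> ld d (F - G)" by (auto simp: ld_def)
lemma ld_uminus: "ld d F \<Longrightarrow> ld d (- F)" by (auto simp: ld_def)
lemma ld_sc: "ld d F \<Longrightarrow> ld d (sc c F)" by (auto simp: ld_def)
lemma ld_sum: "(\<And>s. s \<in> S \<Longrightarrow> ld d (f s)) \<Longrightarrow> ld d (sum f S)"
  by (induction S rule: infinite_finite_induct) (auto intro: ld_add)
lemma ld_mult: assumes "ld d F" "ld e G" shows "ld (d + e) (F * G)"
  unfolding ld_def
proof (intro allI impI)
  fix i j assume "i + j < d + e"
  have "F $ a $ b * G $ (i - a) $ (j - b) = 0" if "a \<le> i" "b \<le> j" for a b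
  proof (cases "a + b < d")
    case True then show ?thesis using assms(1) by (simp add: ld_def)
  next
    case False
    then have "(i - a) + (j - b) < e" using \<open>i + j < d + e\<close> that by linarith
    then show ?thesis using assms(2) by (simp add: ld_def)
  qed
  then show "(F * G) $ i $ j = 0" unfolding R_mult_nth by (intro sum.neutral ballI) auto
qed
lemma ld_pow: "ld 1 F \<Longrightarrow> ld n (F ^ n)"
proof (induction n)
  case 0 then show ?case by simp
next
  case (Suc n)
  then have "ld (1 + n) (F * F ^ n)" by (intro ld_mult) auto
  then show ?case by simp
qed
lemma ld_1_iff: "ld 1 F \<longleftrightarrow> F $ 0 $ 0 = 0" by (auto simp: ld_def)

lemma ld_eq: "(\<And>n. ld n (F - G)) \<Longrightarrow> F = G"
proof (rule R_eqI)
  fix i j assume "\<And>n. ld n (F - G)"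
  then have "ld (i + j + 1) (F - G)" .
  then show "F $ i $ j = G $ i $ j" by (simp add: ld_def)
qed

lemma pow_agree:
  assumes "ld k (A - B)" "ld 1 A" "ld 1 B" "a \<ge> 1"
  shows "ld (k + a - 1) (A ^ a - B ^ a)"
  using assms(4)
proof (induction a rule: dec_induct)
  case base then show ?case using assms(1) by simp
next
  case (step a)
  have eq: "A ^ Suc a - B ^ Suc a = A * (A ^ a - B ^ a) + (A - B) * B ^ a"
    by (simp add: algebra_simps)
  have "ld (1 + (k + a - 1)) (A * (A ^ a - B ^ a))" using step assms by (intro ld_mult)
  moreover have "ld (k + a) ((A - B) * B ^ a)" using assms by (intro ld_mult ld_pow)
  ultimately show ?case unfolding eq using step(1)
    by (intro ld_add) (erule ld_mono, simp)+
qed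

lemma prod_agree:
  assumes "ld k (A1 - B1)" "ld k (A2 - B2)" "ld 1 A1" "ld 1 B1" "ld 1 A2" "ld 1 B2" "a + b \<ge> 2"
  shows "ld (k + 1) (A1 ^ a * A2 ^ b - B1 ^ a * B2 ^ b)"
proof -
  have eq: "A1 ^ a * A2 ^ b - B1 ^ a * B2 ^ b = A1 ^ a * (A2 ^ b - B2 ^ b) + (A1 ^ a - B1 ^ a) * B2 ^ b"
    by (simp add: algebra_simps)
  have t1: "ld (k + 1) (A1 ^ a * (A2 ^ b - B2 ^ b))"
  proof (cases "b = 0")
    case True then show ?thesis by simp
  next
    case False
    have "ld (a + (k + b - 1)) (A1 ^ a * (A2 ^ b - B2 ^ b))"
      using assms False by (intro ld_mult ld_pow pow_agree) auto
    then show ?thesis by (rule ld_mono) (use assms False in auto)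
  qed
  have t2: "ld (k + 1) ((A1 ^ a - B1 ^ a) * B2 ^ b)"
  proof (cases "a = 0")
    case True then show ?thesis by simp
  next
    case False
    have "ld ((k + a - 1) + b) ((A1 ^ a - B1 ^ a) * B2 ^ b)"
      using assms False by (intro ld_mult ld_pow pow_agree) auto
    then show ?thesis by (rule ld_mono) (use assms False in auto)
  qed
  show ?thesis unfolding eq by (intro ld_add t1 t2)
qed


definition cmp :: "R \<Rightarrow> R \<Rightarrow> R \<Rightarrow> R" where
  "cmp F A B = Abs_fps (\<lambda>i. Abs_fps (\<lambda>j. \<Sum>a\<le>i+j. \<Sum>b\<le>i+j. F $ a $ b * (A ^ a * B ^ b) $ i $ j))"

lemma cmp_nth: "cmp F A B $ i $ j = (\<Sum>a\<le>i+j. \<Sum>b\<le>i+j. F $ a $ b * (A ^ a * B ^ b) $ i $ j)"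
  by (simp add: cmp_def)

lemma emb_ps_comp[simp]: "emb (ps_comp f g1 g2) = cmp (emb f) (emb g1) (emb g2)"
proof (rule R_eqI)
  fix i j
  have "ps_mult (ps_pow g1 a) (ps_pow g2 b) i j = (emb g1 ^ a * emb g2 ^ b) $ i $ j" for a b
    by (metis emb_nth emb_ps_mult emb_ps_pow)
  then show "emb (ps_comp f g1 g2) $ i $ j = cmp (emb f) (emb g1) (emb g2) $ i $ j"
    by (simp add: ps_comp_def cmp_nth)
qed

lemma prod_ld: "ld 1 A \<Longrightarrow> ld 1 B \<Longrightarrow> ld (a + b) (A ^ a * B ^ b)"
  by (intro ld_mult ld_pow)

lemma sum_box_ext:
  fixes g :: "nat \<Rightarrow> nat \<Rightarrow> 'a::comm_monoid_add"
  assumes "n \<le> N" "\<And>a b. a \<le> N \<Longrightarrow> b \<le> N \<Longrightarrow> \<not> (a \<le> n \<and> b \<le> n) \<Longrightarrow> g a b = 0"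
  shows "(\<Sum>a\<le>N. \<Sum>b\<le>N. g a b) = (\<Sum>a\<le>n. \<Sum>b\<le>n. g a b)"
proof -
  have "(\<Sum>a\<le>N. \<Sum>b\<le>N. g a b) = (\<Sum>a\<le>n. \<Sum>b\<le>N. g a b)"
    by (rule sum.mono_neutral_right) (use assms in \<open>auto intro!: sum.neutral\<close>)
  also have "\<dots> = (\<Sum>a\<le>n. \<Sum>b\<le>n. g a b)"
    by (intro sum.cong refl sum.mono_neutral_right) (use assms in auto)
  finally show ?thesis .
qed

lemma cmp_nth_ext:
  assumes "ld 1 A" "ld 1 B" "i + j \<le> N"
  shows "cmp F A B $ i $ j = (\<Sum>a\<le>N. \<Sum>b\<le>N. F $ a $ b * (A ^ a * B ^ b) $ i $ j)"
  unfolding cmp_nth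
proof (rule sum_box_ext[symmetric])
  show "i + j \<le> N" by fact
  fix a b assume "\<not> (a \<le> i + j \<and> b \<le> i + j)"
  then have "i + j < a + b" by auto
  then have "(A ^ a * B ^ b) $ i $ j = 0" using prod_ld[OF assms(1,2), of a b] by (auto simp: ld_def)
  then show "F $ a $ b * (A ^ a * B ^ b) $ i $ j = 0" by simp
qed

lemma cmp_add: "cmp (F + G) A B = cmp F A B + cmp G A B"
  by (rule R_eqI) (simp add: cmp_nth algebra_simps sum.distrib)
lemma cmp_diff: "cmp (F - G) A B = cmp F A B - cmp G A B"
  by (rule R_eqI) (simp add: cmp_nth algebra_simps sum_subtractf)
lemma cmp_uminus: "cmp (- F) A B = - cmp F A B"
  by (rule R_eqI) (simp add: cmp_nth sum_negf)
lemma cmp_zero[simp]: "cmp 0 A B = 0"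
  by (rule R_eqI) (simp add: cmp_nth)
lemma cmp_sc: "cmp (sc c F) A B = sc c (cmp F A B)"
  by (rule R_eqI) (simp add: cmp_nth sum_distrib_left mult.assoc)
lemma cmp_sum: "cmp (sum f S) A B = (\<Sum>s\<in>S. cmp (f s) A B)"
  by (induction S rule: infinite_finite_induct) (auto simp: cmp_add)

lemma cmp_00: "cmp F A B $ 0 $ 0 = F $ 0 $ 0"
  by (simp add: cmp_nth)
lemma cmp_ld1: "F $ 0 $ 0 = 0 \<Longrightarrow> ld 1 (cmp F A B)"
  unfolding ld_1_iff by (simp add: cmp_00)

lemma sum2_delta:
  fixes v :: "'a::comm_monoid_add"
  assumes "finite S" "finite T" "a \<in> S" "b \<in> T"
  shows "(\<Sum>a'\<in>S. \<Sum>b'\<in>T. if a' = a \<and> b' = b then v else 0) = v"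
proof -
  have "(\<Sum>b'\<in>T. if a' = a \<and> b' = b then v else 0) = (if a' = a then v else 0)" for a'
  proof -
    have "(\<Sum>b'\<in>T. if a' = a \<and> b' = b then v else 0) = (\<Sum>b'\<in>T. if b' = b then (if a' = a then v else 0) else 0)"
      by (intro sum.cong) auto
    also have "\<dots> = (if a' = a then v else 0)" using assms by (simp add: sum.delta')
    finally show ?thesis .
  qed
  then show ?thesis using assms by (simp add: sum.delta')
qed

lemma cmp_mono:
  assumes "ld 1 A" "ld 1 B"
  shows "cmp (X1 ^ a * X2 ^ b) A B = A ^ a * B ^ b"
proof (rule R_eqI)
  fix i j
  let ?N = "max (i + j) (max a b)"
  have "cmp (X1 ^ a * X2 ^ b) A B $ i $ j = (\<Sum>a'\<le>?N. \<Sum>b'\<le>?N. (X1 ^ a * X2 ^ b) $ a' $ b' * (A ^ a' * B ^ b') $ i $ j)"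
    by (rule cmp_nth_ext) (use assms in auto)
  also have "\<dots> = (\<Sum>a'\<le>?N. \<Sum>b'\<le>?N. (if a' = a \<and> b' = b then (A ^ a * B ^ b) $ i $ j else 0))"
    by (intro sum.cong refl) (auto simp: mono_nth)
  also have "\<dots> = (A ^ a * B ^ b) $ i $ j"
    by (rule sum2_delta) auto
  finally show "cmp (X1 ^ a * X2 ^ b) A B $ i $ j = (A ^ a * B ^ b) $ i $ j" .
qed

lemma cmp_X1: "ld 1 A \<Longrightarrow> ld 1 B \<Longrightarrow> cmp X1 A B = A"
  using cmp_mono[of A B 1 0] by simp
lemma cmp_X2: "ld 1 A \<Longrightarrow> ld 1 B \<Longrightarrow> cmp X2 A B = B"
  using cmp_mono[of A B 0 1] by simp
lemma cmp_one: "ld 1 A \<Longrightarrow> ld 1 B \<Longrightarrow> cmp 1 A B = 1"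
  using cmp_mono[of A B 0 0] by simp

lemma cmp_ld:
  assumes "ld 1 A" "ld 1 B" "ld n H"
  shows "ld n (cmp H A B)"
  unfolding ld_def
proof (intro allI impI)
  fix i j assume ij: "i + j < n"
  have "H $ a $ b * (A ^ a * B ^ b) $ i $ j = 0" for a b
  proof (cases "a + b \<le> i + j")
    case True then show ?thesis using assms(3) ij by (simp add: ld_def)
  next
    case False then show ?thesis using prod_ld[OF assms(1,2), of a b] by (simp add: ld_def)
  qed
  then show "cmp H A B $ i $ j = 0" unfolding cmp_nth by (intro sum.neutral ballI)
qed

lemma cmp_cont:
  assumes "ld 1 A" "ld 1 B" "ld n (F - G)"
  shows "ld n (cmp F A B - cmp G A B)"
  using cmp_ld[OF assms] by (simp add: cmp_diff)

lemma cmp_N: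
  assumes "ld k (A - A')" "ld k (B - B')" "ld 1 A" "ld 1 B" "ld 1 A'" "ld 1 B'"
    and supp: "\<And>a b. F $ a $ b \<noteq> 0 \<Longrightarrow> a + b \<ge> 2"
  shows "ld (k + 1) (cmp F A B - cmp F A' B')"
  unfolding ld_def
proof (intro allI impI)
  fix i j assume ij: "i + j < k + 1"
  have z: "F $ a $ b * ((A ^ a * B ^ b) $ i $ j - (A' ^ a * B' ^ b) $ i $ j) = 0" for a b
  proof (cases "F $ a $ b = 0")
    case False
    have "ld (k + 1) (A ^ a * B ^ b - A' ^ a * B' ^ b)"
      by (rule prod_agree[OF assms(1,2,3,5,4,6) supp[OF False]])
    then have "(A ^ a * B ^ b - A' ^ a * B' ^ b) $ i $ j = 0" using ij unfolding ld_def by blast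
    then show ?thesis by simp
  qed simp
  have eq: "(cmp F A B - cmp F A' B') $ i $ j = (\<Sum>a\<le>i+j. \<Sum>b\<le>i+j. F $ a $ b * ((A ^ a * B ^ b) $ i $ j - (A' ^ a * B' ^ b) $ i $ j))"
    by (simp add: cmp_nth sum_subtractf right_diff_distrib)
  show "(cmp F A B - cmp F A' B') $ i $ j = 0"
    unfolding eq by (intro sum.neutral ballI z)
qed

lemma cmp_id: "cmp F X1 X2 = F"
proof (rule R_eqI)
  fix i j
  have "cmp F X1 X2 $ i $ j = (\<Sum>a\<le>i+j. \<Sum>b\<le>i+j. (if a = i \<and> b = j then F $ i $ j else 0))"
    unfolding cmp_nth by (intro sum.cong refl) (auto simp: mono_nth)
  also have "\<dots> = F $ i $ j" by (rule sum2_delta) auto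
  finally show "cmp F X1 X2 $ i $ j = F $ i $ j" .
qed

definition polyt :: "nat \<Rightarrow> R \<Rightarrow> R" where
  "polyt n F = (\<Sum>a<n. \<Sum>b<n. sc (F $ a $ b) (X1 ^ a * X2 ^ b))"

lemma polyt_nth: "polyt n F $ i $ j = (if i < n \<and> j < n then F $ i $ j else 0)"
proof -
  have "polyt n F $ i $ j = (\<Sum>a<n. \<Sum>b<n. (if a = i \<and> b = j then F $ i $ j else 0))"
    unfolding polyt_def fps_sum_nth sc_nth by (intro sum.cong refl) (auto simp: mono_nth)
  also have "\<dots> = (if i < n \<and> j < n then F $ i $ j else 0)"
  proof (cases "i < n \<and> j < n")
    case True then show ?thesis by (simp add: sum2_delta)
  next
    case False then show ?thesis by (auto intro!: sum.neutral)
  qed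
  finally show ?thesis .
qed

lemma polyt_ld: "ld n (F - polyt n F)"
  by (auto simp: ld_def polyt_nth)

lemma cmp_polyt: "ld 1 A \<Longrightarrow> ld 1 B \<Longrightarrow> cmp (polyt n F) A B = (\<Sum>a<n. \<Sum>b<n. sc (F $ a $ b) (A ^ a * B ^ b))"
  by (simp add: polyt_def cmp_sum cmp_sc cmp_mono)

lemma sc_mult_sc: "sc c F * sc d G = sc (c * d) (F * G)"
  by (simp add: sc_def algebra_simps flip: fps_const_mult)

lemma cmp_mult_polyt:
  assumes "ld 1 A" "ld 1 B"
  shows "cmp (polyt n F * polyt n G) A B = cmp (polyt n F) A B * cmp (polyt n G) A B"
proof -
  have "polyt n F * polyt n G = (\<Sum>a<n. \<Sum>c<n. \<Sum>b<n. \<Sum>d<n. sc (F $ a $ b * G $ c $ d) (X1 ^ (a + c) * X2 ^ (b + d)))"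
    unfolding polyt_def sum_product sc_mult_sc by (simp add: power_add algebra_simps)
  then have "cmp (polyt n F * polyt n G) A B = (\<Sum>a<n. \<Sum>c<n. \<Sum>b<n. \<Sum>d<n. sc (F $ a $ b * G $ c $ d) (A ^ (a + c) * B ^ (b + d)))"
    using assms by (simp add: cmp_sum cmp_sc cmp_mono)
  also have "\<dots> = cmp (polyt n F) A B * cmp (polyt n G) A B"
    unfolding cmp_polyt[OF assms] sum_product sc_mult_sc by (simp add: power_add algebra_simps)
  finally show ?thesis .
qed

lemma ld_mult_agree:
  assumes "ld n (F - F')" "ld n (G - G')"
  shows "ld n (F * G - F' * G')"
proof -
  have "F * G - F' * G' = (F - F') * G + F' * (G - G')" by (simp add: algebra_simps)
  moreover have "ld n ((F - F') * G)" using ld_mult[OF assms(1) ld_0[of G]] by simp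
  moreover have "ld n (F' * (G - G'))" using ld_mult[OF ld_0[of F'] assms(2)] by simp
  ultimately show ?thesis by (simp add: ld_add)
qed

lemma ld_trans: "ld n (F - G) \<Longrightarrow> ld n (G - H) \<Longrightarrow> ld n (F - H)"
  using ld_add[of n "F - G" "G - H"] by simp
lemma ld_sym: "ld n (F - G) \<Longrightarrow> ld n (G - F)"
  using ld_uminus[of n "F - G"] by simp

lemma cmp_mult:
  assumes A: "ld 1 A" "ld 1 B"
  shows "cmp (F * G) A B = cmp F A B * cmp G A B"
proof (rule ld_eq)
  fix n
  have "ld n (F * G - polyt n F * polyt n G)"
    by (intro ld_mult_agree polyt_ld)
  then have 1: "ld n (cmp (F * G) A B - cmp (polyt n F * polyt n G) A B)"
    using cmp_cont[OF A] by blast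
  have "ld n (cmp (polyt n F) A B * cmp (polyt n G) A B - cmp F A B * cmp G A B)"
    by (intro ld_mult_agree; rule ld_sym, rule cmp_cont[OF A], rule polyt_ld)
  then have 2: "ld n (cmp (polyt n F * polyt n G) A B - cmp F A B * cmp G A B)"
    by (simp only: cmp_mult_polyt[OF A])
  show "ld n (cmp (F * G) A B - cmp F A B * cmp G A B)"
    by (rule ld_trans[OF 1 2])
qed

lemma cmp_pow:
  assumes "ld 1 A" "ld 1 B"
  shows "cmp (F ^ k) A B = cmp F A B ^ k"
  by (induction k) (simp_all add: cmp_one[OF assms] cmp_mult[OF assms])

lemma cmp_assoc:
  assumes M: "ld 1 M1" "ld 1 M2" and A: "ld 1 A" "ld 1 B"
  shows "cmp (cmp F M1 M2) A B = cmp F (cmp M1 A B) (cmp M2 A B)"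
proof (rule ld_eq)
  fix n
  have C: "ld 1 (cmp M1 A B)" "ld 1 (cmp M2 A B)"
    using M unfolding ld_1_iff by (simp_all add: cmp_00)
  have "ld n (cmp F M1 M2 - cmp (polyt n F) M1 M2)"
    by (intro cmp_cont[OF M] polyt_ld)
  then have 1: "ld n (cmp (cmp F M1 M2) A B - cmp (cmp (polyt n F) M1 M2) A B)"
    by (intro cmp_cont[OF A])
  have "cmp (cmp (polyt n F) M1 M2) A B = (\<Sum>a<n. \<Sum>b<n. sc (F $ a $ b) (cmp M1 A B ^ a * cmp M2 A B ^ b))"
    by (simp add: cmp_polyt[OF M] cmp_sum cmp_sc cmp_mult[OF A] cmp_pow[OF A])
  also have "\<dots> = cmp (polyt n F) (cmp M1 A B) (cmp M2 A B)"
    by (simp add: cmp_polyt[OF C])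
  finally have 2: "cmp (cmp (polyt n F) M1 M2) A B = cmp (polyt n F) (cmp M1 A B) (cmp M2 A B)" .
  have 3: "ld n (cmp (polyt n F) (cmp M1 A B) (cmp M2 A B) - cmp F (cmp M1 A B) (cmp M2 A B))"
    by (rule cmp_cont[OF C], rule ld_sym, rule polyt_ld)
  show "ld n (cmp (cmp F M1 M2) A B - cmp F (cmp M1 A B) (cmp M2 A B))"
    by (rule ld_trans[OF 1]) (simp only: 2 3)
qed


lemma p_integral_iff:
  assumes "prime p"
  shows "p_integral p r \<longleftrightarrow> (\<exists>a b. b \<noteq> 0 \<and> \<not> int p dvd b \<and> r = of_int a / of_int b)"
proof
  assume "p_integral p r"
  obtain a b where q: "quotient_of r = (a, b)" by (cases "quotient_of r")
  then have "r = of_int a / of_int b" "b > 0" by (auto intro: quotient_of_div quotient_of_denom_pos)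
  moreover have "\<not> int p dvd b" using \<open>p_integral p r\<close> q by (simp add: p_integral_def)
  ultimately show "\<exists>a b. b \<noteq> 0 \<and> \<not> int p dvd b \<and> r = of_int a / of_int b"
    by (intro exI[of _ a] exI[of _ b]) auto
next
  assume "\<exists>a b. b \<noteq> 0 \<and> \<not> int p dvd b \<and> r = of_int a / of_int b"
  then obtain a b where ab: "b \<noteq> 0" "\<not> int p dvd b" "r = of_int a / of_int b" by blast
  obtain a' b' where q: "quotient_of r = (a', b')" by (cases "quotient_of r")
  then have r': "r = of_int a' / of_int b'" "b' > 0" "coprime a' b'"
    by (auto intro: quotient_of_div quotient_of_denom_pos quotient_of_coprime)
  have "of_int a / of_int b = (of_int a' / of_int b' :: rat)" using ab r' by simp
  then have "of_int (a * b') = (of_int (a' * b) :: rat)" using ab(1) r'(2)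
    by (simp add: field_simps)
  then have e: "a * b' = a' * b" by (simp only: of_int_eq_iff)
  then have "b' dvd a' * b" by (metis dvd_triv_right)
  then have "b' dvd b" using r'(3) by (metis coprime_commute coprime_dvd_mult_right_iff)
  then have "\<not> int p dvd b'" using ab(2) dvd_trans by blast
  then show "p_integral p r" using q by (simp add: p_integral_def)
qed

locale padic =
  fixes p :: nat
  assumes prime: "prime p"
begin

abbreviation pint :: "rat \<Rightarrow> bool" where "pint \<equiv> p_integral p"

lemma p_gt1: "p > 1" using prime prime_gt_1_nat by blast
lemma p_pos: "(of_nat p :: rat) > 0" using p_gt1 by simp
lemma p_nz: "(of_nat p :: rat) \<noteq> 0" using p_gt1 by simp
lemma iprime: "prime (int p)" using prime by simp

lemma pint_iff: "pint r \<longleftrightarrow> (\<exists>a b. b \<noteq> 0 \<and> \<not> int p dvd b \<and> r = of_int a / of_int b)"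
  using p_integral_iff[OF prime] .

lemma pint_of_int[simp]: "pint (of_int a)"
  unfolding pint_iff by (rule exI[of _ a], rule exI[of _ 1]) (use p_gt1 in auto)
lemma pint_of_nat[simp]: "pint (of_nat a)"
  using pint_of_int[of "int a"] by simp
lemma pint_0[simp]: "pint 0" using pint_of_int[of 0] by simp
lemma pint_1[simp]: "pint 1" using pint_of_int[of 1] by simp

lemma pint_mult: assumes "pint x" "pint y" shows "pint (x * y)"
proof -
  obtain a b c d where "b \<noteq> 0" "\<not> int p dvd b" "x = of_int a / of_int b"
    "d \<noteq> 0" "\<not> int p dvd d" "y = of_int c / of_int d"
    using assms unfolding pint_iff by blast
  moreover have "\<not> int p dvd b * d" using iprime calculation
    by (simp add: prime_dvd_mult_iff)
  ultimately show ?thesis unfolding pint_iff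
    by (intro exI[of _ "a * c"] exI[of _ "b * d"]) auto
qed

lemma pint_add: assumes "pint x" "pint y" shows "pint (x + y)"
proof -
  obtain a b c d where "b \<noteq> 0" "\<not> int p dvd b" "x = of_int a / of_int b"
    "d \<noteq> 0" "\<not> int p dvd d" "y = of_int c / of_int d"
    using assms unfolding pint_iff by blast
  moreover have "\<not> int p dvd b * d" using iprime calculation
    by (simp add: prime_dvd_mult_iff)
  ultimately show ?thesis unfolding pint_iff
    by (intro exI[of _ "a * d + c * b"] exI[of _ "b * d"]) (auto simp: field_simps)
qed

lemma pint_uminus: assumes "pint x" shows "pint (- x)"
  using pint_mult[OF pint_of_int[of "-1"] assms] by simp
lemma pint_diff: "pint x \<Longrightarrow> pint y \<Longrightarrow> pint (x - y)"
  using pint_add[of x "- y"] pint_uminus[of y] by simp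
lemma pint_sum: "(\<And>s. s \<in> S \<Longrightarrow> pint (f s)) \<Longrightarrow> pint (sum f S)"
  by (induction S rule: infinite_finite_induct) (auto intro: pint_add)
lemma pint_pow: "pint x \<Longrightarrow> pint (x ^ n)"
  by (induction n) (auto intro: pint_mult)

definition pdv :: "nat \<Rightarrow> rat \<Rightarrow> bool" where "pdv t x \<longleftrightarrow> pint (x / of_nat p ^ t)"

lemma pdv_0_iff: "pdv 0 x \<longleftrightarrow> pint x" by (simp add: pdv_def)
lemma pdv_zero[simp]: "pdv t 0" by (simp add: pdv_def)
lemma pdv_mult: assumes "pdv s x" "pdv t y" shows "pdv (s + t) (x * y)"
proof -
  have "x * y / of_nat p ^ (s + t) = (x / of_nat p ^ s) * (y / of_nat p ^ t)"
    by (simp add: power_add)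
  then show ?thesis using assms unfolding pdv_def by (simp only:) (rule pint_mult)
qed
lemma pdv_add: "pdv t x \<Longrightarrow> pdv t y \<Longrightarrow> pdv t (x + y)"
  unfolding pdv_def by (simp add: add_divide_distrib pint_add)
lemma pdv_diff: "pdv t x \<Longrightarrow> pdv t y \<Longrightarrow> pdv t (x - y)"
  unfolding pdv_def by (simp add: diff_divide_distrib pint_diff)
lemma pdv_uminus: "pdv t x \<Longrightarrow> pdv t (- x)"
  unfolding pdv_def using pint_uminus by fastforce
lemma pdv_sum: "(\<And>s. s \<in> S \<Longrightarrow> pdv t (f s)) \<Longrightarrow> pdv t (sum f S)"
  by (induction S rule: infinite_finite_induct) (auto intro: pdv_add)
lemma pdv_mono: assumes "pdv t x" "s \<le> t" shows "pdv s x"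
proof -
  have "x / of_nat p ^ s = (x / of_nat p ^ t) * of_nat (p ^ (t - s))"
    using assms(2) p_nz by (simp add: field_simps flip: power_add)
  then show ?thesis unfolding pdv_def by (simp only:) (rule pint_mult[OF assms(1)[unfolded pdv_def] pint_of_nat])
qed
lemma pdv_pow_p: "pdv t (of_nat p ^ t)"
  unfolding pdv_def using p_nz by simp
lemma pdv_nat_dvd: assumes "p dvd n" shows "pdv 1 (of_nat n)"
proof -
  obtain m where "n = p * m" using assms by blast
  then have "of_nat n / of_nat p ^ 1 = (of_nat m :: rat)" using p_nz by simp
  then show ?thesis unfolding pdv_def by simp
qed
lemma pdv_mult_int: "pint c \<Longrightarrow> pdv t x \<Longrightarrow> pdv t (c * x)"
  using pdv_mult[of 0 c t x] by (simp add: pdv_0_iff)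

definition cg :: "nat \<Rightarrow> R \<Rightarrow> bool" where "cg t F \<longleftrightarrow> (\<forall>i j. pdv t (F $ i $ j))"

lemma cg_zero[simp]: "cg t 0" by (simp add: cg_def)
lemma cg_add: "cg t F \<Longrightarrow> cg t G \<Longrightarrow> cg t (F + G)" by (simp add: cg_def pdv_add)
lemma cg_diff: "cg t F \<Longrightarrow> cg t G \<Longrightarrow> cg t (F - G)" by (simp add: cg_def pdv_diff)
lemma cg_uminus: "cg t F \<Longrightarrow> cg t (- F)" by (simp add: cg_def pdv_uminus)
lemma cg_mono: "cg t F \<Longrightarrow> s \<le> t \<Longrightarrow> cg s F" by (meson cg_def pdv_mono)
lemma cg_sum: "(\<And>s. s \<in> S \<Longrightarrow> cg t (f s)) \<Longrightarrow> cg t (sum f S)"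
  by (induction S rule: infinite_finite_induct) (auto intro: cg_add)
lemma cg_mult: assumes "cg s F" "cg t G" shows "cg (s + t) (F * G)"
  unfolding cg_def R_mult_nth
  using assms unfolding cg_def by (intro allI pdv_sum pdv_mult) auto
lemma cg_one[simp]: "cg 0 1" by (auto simp: cg_def pdv_0_iff one_nth)
lemma cg_pow: "cg t F \<Longrightarrow> cg (t * k) (F ^ k)"
proof (induction k)
  case 0 then show ?case by simp
next
  case (Suc k)
  then have "cg (t + t * k) (F * F ^ k)" by (intro cg_mult) auto
  then show ?case by (simp add: add.commute)
qed
lemma cg_of_nat_dvd: assumes "p dvd n" shows "cg 1 (of_nat n)"
  unfolding cg_def
proof (intro allI)
  fix i j
  have "(of_nat n :: R) $ i $ j = (if i = 0 \<and> j = 0 then of_nat n else 0)" by simp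
  then show "pdv 1 ((of_nat n :: R) $ i $ j)" using pdv_nat_dvd[OF assms] by simp
qed
lemma cg_X1p: "cg 0 (X1 ^ a)" by (auto simp: cg_def X1p_nth pdv_0_iff)
lemma cg_X2p: "cg 0 (X2 ^ a)" by (auto simp: cg_def X2p_nth pdv_0_iff)
lemma cg_sc_int: "pint c \<Longrightarrow> cg t F \<Longrightarrow> cg t (sc c F)"
  by (auto simp: cg_def pdv_mult_int)

lemma frob_step:
  assumes B: "cg 0 B" and D: "cg r D" and r: "r \<ge> 1"
  shows "cg (r + 1) ((D + B) ^ p - B ^ p)"
proof -
  have eq: "(D + B) ^ p = (\<Sum>k\<le>p. of_nat (p choose k) * D ^ k * B ^ (p - k))"
    by (rule binomial_ring)
  have "(\<Sum>k\<le>p. of_nat (p choose k) * D ^ k * B ^ (p - k)) =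
      (\<Sum>k\<in>{1..p}. of_nat (p choose k) * D ^ k * B ^ (p - k)) + B ^ p"
  proof -
    have "{..p} = insert 0 {1..p}" by auto
    then show ?thesis by simp
  qed
  then have "(D + B) ^ p - B ^ p = (\<Sum>k\<in>{1..p}. of_nat (p choose k) * D ^ k * B ^ (p - k))"
    using eq by simp
  also have "cg (r + 1) \<dots>"
  proof (rule cg_sum)
    fix k assume k: "k \<in> {1..p}"
    have Bk: "cg 0 (B ^ (p - k))" using cg_pow[OF B] by simp
    show "cg (r + 1) (of_nat (p choose k) * D ^ k * B ^ (p - k))"
    proof (cases "k = p")
      case True
      have "cg (r * p) (D ^ p)" by (rule cg_pow[OF D])
      moreover have "r + 1 \<le> r * p" using p_gt1 r
        by (metis One_nat_def Suc_eq_plus1 Suc_leI le_less_trans less_add_same_cancel1 mult.right_neutral mult_less_cancel1 not_less zero_less_one)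
      ultimately have "cg (r + 1) (D ^ p)" by (rule cg_mono)
      then show ?thesis using True by simp
    next
      case False
      then have "p dvd (p choose k)" using k prime by (intro dvd_choose_prime) auto
      then have "cg 1 (of_nat (p choose k) :: R)" by (rule cg_of_nat_dvd)
      moreover have "cg (r * k) (D ^ k)" by (rule cg_pow[OF D])
      then have "cg r (D ^ k)" by (rule cg_mono) (use k in auto)
      ultimately have "cg (1 + r + 0) (of_nat (p choose k) * D ^ k * B ^ (p - k))"
        using Bk by (intro cg_mult)
      then show ?thesis by (simp add: add.commute)
    qed
  qed
  finally show ?thesis .
qed

lemma frob:
  assumes A: "cg 0 A" and B: "cg 0 B" and AB: "cg 1 (A - B)"
  shows "cg (1 + t) (A ^ (p ^ t) - B ^ (p ^ t))"
proof (induction t)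
  case 0 then show ?case using AB by simp
next
  case (Suc t)
  let ?D = "A ^ (p ^ t) - B ^ (p ^ t)"
  have "cg 0 (B ^ (p ^ t))" using cg_pow[OF B] by simp
  then have "cg (1 + t + 1) ((?D + B ^ (p ^ t)) ^ p - (B ^ (p ^ t)) ^ p)"
    using Suc by (intro frob_step) auto
  then show ?case by (simp add: power_mult[symmetric] mult.commute)
qed

definition Wpt :: "rat \<Rightarrow> nat \<Rightarrow> nat \<Rightarrow> bool" where
  "Wpt v a b \<longleftrightarrow> (v \<noteq> 0 \<longrightarrow> (\<exists>t\<ge>1. (a = p ^ t \<and> b = 0 \<or> a = 0 \<and> b = p ^ t) \<and> pint (v * of_nat p ^ t)))"

lemma Wpt_zero[simp]: "Wpt 0 a b" by (simp add: Wpt_def)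

lemma Wpt_add: assumes "Wpt v a b" "Wpt w a b" shows "Wpt (v + w) a b"
proof (cases "v = 0 \<or> w = 0")
  case True then show ?thesis using assms by auto
next
  case False
  then obtain t s where t: "t \<ge> 1" "a = p ^ t \<and> b = 0 \<or> a = 0 \<and> b = p ^ t" "pint (v * of_nat p ^ t)"
    and s: "s \<ge> 1" "a = p ^ s \<and> b = 0 \<or> a = 0 \<and> b = p ^ s" "pint (w * of_nat p ^ s)"
    using assms unfolding Wpt_def by blast
  have pt: "p ^ t \<noteq> 0" "p ^ s \<noteq> 0" using p_gt1 by simp_all
  have "p ^ t = p ^ s" using t(2) s(2) pt by linarith
  then have "t = s" using p_gt1 by (simp add: power_inject_exp)
  then have "pint ((v + w) * of_nat p ^ t)" using t s by (simp add: distrib_right pint_add)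
  then show ?thesis using t unfolding Wpt_def by blast
qed

lemma Wpt_sum: "(\<And>s. s \<in> S \<Longrightarrow> Wpt (f s) a b) \<Longrightarrow> Wpt (sum f S) a b"
  by (induction S rule: infinite_finite_induct) (auto intro: Wpt_add)

lemma p_pow_ge2: "t \<ge> 1 \<Longrightarrow> p ^ t \<ge> 2"
proof -
  assume "t \<ge> 1"
  then have "p ^ 1 \<le> p ^ t" using p_gt1 by (intro power_increasing) auto
  then show ?thesis using p_gt1 by simp
qed

lemma Wpt_supp: assumes "Wpt v a b" "v \<noteq> 0" shows "a + b \<ge> 2"
proof -
  obtain t where "t \<ge> 1" "a = p ^ t \<and> b = 0 \<or> a = 0 \<and> b = p ^ t"
    using assms unfolding Wpt_def by blast
  then show ?thesis using p_pow_ge2[of t] by auto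
qed

definition W :: "R \<Rightarrow> bool" where "W F \<longleftrightarrow> (\<forall>a b. Wpt (F $ a $ b) a b)"

lemma lemM:
  assumes WF: "W F"
    and A: "cg 0 A1" "cg 0 A2" "ld 1 A1" "ld 1 A2"
    and B: "cg 0 B1" "cg 0 B2" "ld 1 B1" "ld 1 B2"
    and AB: "cg 1 (A1 - B1)" "cg 1 (A2 - B2)"
  shows "cg 1 (cmp F A1 A2 - cmp F B1 B2)"
  unfolding cg_def
proof (intro allI)
  fix i j
  have eq: "(cmp F A1 A2 - cmp F B1 B2) $ i $ j = (\<Sum>a\<le>i+j. \<Sum>b\<le>i+j. F $ a $ b * ((A1 ^ a * A2 ^ b) $ i $ j - (B1 ^ a * B2 ^ b) $ i $ j))"
    by (simp add: cmp_nth sum_subtractf right_diff_distrib)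
  have "pdv 1 (F $ a $ b * ((A1 ^ a * A2 ^ b) $ i $ j - (B1 ^ a * B2 ^ b) $ i $ j))" for a b
  proof (cases "F $ a $ b = 0")
    case False
    then obtain t where t: "a = p ^ t \<and> b = 0 \<or> a = 0 \<and> b = p ^ t" "pint (F $ a $ b * of_nat p ^ t)"
      using WF unfolding W_def Wpt_def by blast
    have "cg (1 + t) (A1 ^ a * A2 ^ b - B1 ^ a * B2 ^ b)"
      using t(1) frob[OF A(1) B(1) AB(1), of t] frob[OF A(2) B(2) AB(2), of t] by auto
    then have d: "pdv (1 + t) ((A1 ^ a * A2 ^ b) $ i $ j - (B1 ^ a * B2 ^ b) $ i $ j)"
      unfolding cg_def by auto
    define x where "x = (A1 ^ a * A2 ^ b) $ i $ j - (B1 ^ a * B2 ^ b) $ i $ j"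
    have "F $ a $ b * x / of_nat p ^ 1
        = (F $ a $ b * of_nat p ^ t) * (x / of_nat p ^ (1 + t))"
      using p_nz by (simp add: field_simps power_add)
    then show ?thesis using t(2) d[folded x_def] unfolding pdv_def x_def[symmetric]
      by (simp only:) (rule pint_mult)
  qed simp
  then show "pdv 1 ((cmp F A1 A2 - cmp F B1 B2) $ i $ j)"
    unfolding eq by (intro pdv_sum) auto
qed

end


lemma alg_identity:
  fixes Y Z P Q :: R and c d :: "nat \<Rightarrow> rat" and pr :: rat
  assumes P: "P = Z ^ (p ^ a)" and Q: "Q = Y ^ (p ^ b)" and hh: "a + b = hh"
    and cd: "\<And>k. pr * d k = c k" "\<And>k. pr * c (Suc k) = d k" "c 0 = 1"
  shows "sc pr (Y + ((\<Sum>k\<in>{1..n}. sc (c k) (Y ^ (p ^ (k * hh)))) + (\<Sum>k\<in>{0..n}. sc (d k) (Z ^ (p ^ (a + k * hh))))))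
    = sc pr Y + (P + (\<Sum>k\<in>{1..n}. sc (c k) (P ^ (p ^ (k * hh)))) + (\<Sum>k\<in>{0..n}. sc (d k) (Q ^ (p ^ (a + k * hh)))))
      - sc (d n) (Y ^ (p ^ (Suc n * hh)))"
proof -
  have scadd: "sc c (F + G) = sc c F + sc c G" for c F G by (simp add: sc_def algebra_simps)
  have scsum: "sc c (sum f S) = (\<Sum>s\<in>S. sc c (f s))" for c f and S :: "nat set"
    by (simp add: sc_def sum_distrib_left)
  have scsc: "sc c (sc d F) = sc (c * d) F" for c d F by (simp add: sc_def mult.assoc flip: fps_const_mult)
  have sc1: "sc 1 F = F" for F by (simp add: sc_def)
  have P': "(Z ^ (p ^ a)) ^ (p ^ (k * hh)) = Z ^ (p ^ (a + k * hh))" for k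
    by (simp only: power_mult[symmetric] power_add)
  have Q': "Q ^ (p ^ (a + k * hh)) = Y ^ (p ^ (Suc k * hh))" for k
  proof -
    have e: "b + (a + k * hh) = Suc k * hh" using hh by simp
    show ?thesis unfolding Q power_mult[symmetric] power_add[symmetric] e ..
  qed
  define f where "f k = sc (d (k - 1)) (Y ^ (p ^ (k * hh)))" for k
  have A: "(\<Sum>k\<in>{0..n}. sc (pr * d k) (Z ^ (p ^ (a + k * hh)))) = P + (\<Sum>k\<in>{1..n}. sc (c k) (P ^ (p ^ (k * hh))))"
  proof -
    have "{0..n} = insert 0 {1..n}" by auto
    then have "(\<Sum>k\<in>{0..n}. sc (pr * d k) (Z ^ (p ^ (a + k * hh)))) = sc (c 0) (Z ^ (p ^ a)) + (\<Sum>k\<in>{1..n}. sc (c k) (Z ^ (p ^ (a + k * hh))))"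
      by (simp add: cd)
    then show ?thesis by (simp add: cd sc1 P' P)
  qed
  have B: "(\<Sum>k\<in>{1..n}. sc (pr * c k) (Y ^ (p ^ (k * hh)))) = (\<Sum>k\<in>{1..n}. f k)"
  proof (intro sum.cong refl)
    fix k assume "k \<in> {1..n}"
    then obtain m where "k = Suc m" by (cases k) auto
    then show "sc (pr * c k) (Y ^ (p ^ (k * hh))) = f k" by (simp add: f_def cd)
  qed
  have C: "(\<Sum>k\<in>{0..n}. sc (d k) (Q ^ (p ^ (a + k * hh)))) = (\<Sum>k\<in>{1..n}. f k) + sc (d n) (Y ^ (p ^ (Suc n * hh)))"
  proof -
    have "(\<Sum>k\<in>{0..n}. sc (d k) (Q ^ (p ^ (a + k * hh)))) = (\<Sum>k\<in>{0..n}. f (Suc k))"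
      by (simp add: f_def Q')
    also have "\<dots> = (\<Sum>k\<in>{Suc 0..Suc n}. f k)"
      by (rule sum.shift_bounds_cl_Suc_ivl[symmetric])
    also have "\<dots> = (\<Sum>k\<in>{1..n}. f k) + f (Suc n)"
      by simp
    finally show ?thesis by (simp add: f_def)
  qed
  show ?thesis
    unfolding scadd scsum scsc A B C by (simp add: algebra_simps)
qed

locale LTc = padic +
  fixes h1 h2 :: nat
  assumes h1: "h1 > 0" and h2: "h2 > 0"
begin

abbreviation hh :: nat where "hh \<equiv> h1 + h2"

definition L1R :: R where "L1R = emb (LT_L1 p h1 h2)"
definition L2R :: R where "L2R = emb (LT_L2 p h1 h2)"
definition N1R :: R where "N1R = L1R - X1"
definition N2R :: R where "N2R = L2R - X2"
definition Phi1 :: R where "Phi1 = X2 ^ (p ^ h1)"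
definition Phi2 :: R where "Phi2 = X1 ^ (p ^ h2)"

definition cc :: "nat \<Rightarrow> rat" where "cc k = 1 / of_nat p ^ (2 * k)"
definition dd :: "nat \<Rightarrow> rat" where "dd k = 1 / of_nat p ^ (2 * k + 1)"

definition N1n :: "nat \<Rightarrow> R" where
  "N1n n = (\<Sum>k\<in>{1..n}. sc (cc k) (X1 ^ (p ^ (k * hh)))) + (\<Sum>k\<in>{0..n}. sc (dd k) (X2 ^ (p ^ (h1 + k * hh))))"
definition N2n :: "nat \<Rightarrow> R" where
  "N2n n = (\<Sum>k\<in>{1..n}. sc (cc k) (X2 ^ (p ^ (k * hh)))) + (\<Sum>k\<in>{0..n}. sc (dd k) (X1 ^ (p ^ (h2 + k * hh))))"

lemma hh_ge2: "hh \<ge> 2" using h1 h2 by simp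

lemma k_lt_pow: "k < p ^ (k * hh)"
proof -
  have "k < 2 ^ k" by simp
  also have "(2::nat) ^ k \<le> p ^ k" using p_gt1 by (intro power_mono) auto
  also have "p ^ k \<le> p ^ (k * hh)" using p_gt1 hh_ge2 by (intro power_increasing) auto
  finally show ?thesis .
qed

lemma k_lt_pow': "k < p ^ (m + k * hh)"
proof -
  have "p ^ (k * hh) \<le> p ^ (m + k * hh)" using p_gt1 by (intro power_increasing) auto
  then show ?thesis using k_lt_pow[of k] by linarith
qed

lemma cd_props: "of_nat p * dd k = cc k" "of_nat p * cc (Suc k) = dd k" "cc 0 = 1"
  using p_nz by (simp_all add: cc_def dd_def)

lemma sum_ext_zero:
  fixes g :: "nat \<Rightarrow> rat"
  assumes "A \<subseteq> B" "finite B" "\<And>k. k \<in> B - A \<Longrightarrow> g k = 0"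
  shows "sum g A = sum g B"
  by (rule sum.mono_neutral_left) (use assms in auto)

lemma L1_approx:
  assumes n: "i + j < n"
  shows "L1R $ i $ j = (X1 + N1n n) $ i $ j"
proof -
  have s1: "(\<Sum>k\<in>{1..i}. if i = p ^ (k * hh) \<and> j = 0 then 1 / of_nat p ^ (2 * k) else 0)
      = (\<Sum>k\<in>{1..n}. sc (cc k) (X1 ^ (p ^ (k * hh))) $ i $ j)"
  proof -
    have "(\<Sum>k\<in>{1..n}. sc (cc k) (X1 ^ (p ^ (k * hh))) $ i $ j)
        = (\<Sum>k\<in>{1..n}. if i = p ^ (k * hh) \<and> j = 0 then 1 / of_nat p ^ (2 * k) else 0)"
      by (intro sum.cong refl) (simp add: X1p_nth cc_def)
    also have "\<dots> = (\<Sum>k\<in>{1..i}. if i = p ^ (k * hh) \<and> j = 0 then 1 / of_nat p ^ (2 * k) else 0)"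
    proof (rule sum_ext_zero[symmetric])
      fix k assume "k \<in> {1..n} - {1..i}"
      then have "i < k" by auto
      then have "i \<noteq> p ^ (k * hh)" using k_lt_pow[of k] by simp
      then show "(if i = p ^ (k * hh) \<and> j = 0 then 1 / of_nat p ^ (2 * k) else 0) = (0::rat)" by simp
    qed (use n in auto)
    finally show ?thesis by simp
  qed
  have s2: "(\<Sum>k\<in>{0..j}. if i = 0 \<and> j = p ^ (h1 + k * hh) then 1 / of_nat p ^ (2 * k + 1) else 0)
      = (\<Sum>k\<in>{0..n}. sc (dd k) (X2 ^ (p ^ (h1 + k * hh))) $ i $ j)"
  proof -
    have "(\<Sum>k\<in>{0..n}. sc (dd k) (X2 ^ (p ^ (h1 + k * hh))) $ i $ j)
        = (\<Sum>k\<in>{0..n}. if i = 0 \<and> j = p ^ (h1 + k * hh) then 1 / of_nat p ^ (2 * k + 1) else 0)"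
      by (intro sum.cong refl) (simp add: X2p_nth dd_def)
    also have "\<dots> = (\<Sum>k\<in>{0..j}. if i = 0 \<and> j = p ^ (h1 + k * hh) then 1 / of_nat p ^ (2 * k + 1) else 0)"
    proof (rule sum_ext_zero[symmetric])
      fix k assume "k \<in> {0..n} - {0..j}"
      then have "j < k" by auto
      then have "j \<noteq> p ^ (h1 + k * hh)" using k_lt_pow'[of k h1] by simp
      then show "(if i = 0 \<and> j = p ^ (h1 + k * hh) then 1 / of_nat p ^ (2 * k + 1) else 0) = (0::rat)" by simp
    qed (use n in auto)
    finally show ?thesis by simp
  qed
  show ?thesis
    unfolding L1R_def emb_nth LT_L1_def Let_def N1n_def fps_add_nth fps_sum_nth s1 s2
    by (simp add: X1_nth)
qed

lemma L2_approx:
  assumes n: "i + j < n"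
  shows "L2R $ i $ j = (X2 + N2n n) $ i $ j"
proof -
  have s1: "(\<Sum>k\<in>{1..j}. if j = p ^ (k * hh) \<and> i = 0 then 1 / of_nat p ^ (2 * k) else 0)
      = (\<Sum>k\<in>{1..n}. sc (cc k) (X2 ^ (p ^ (k * hh))) $ i $ j)"
  proof -
    have "(\<Sum>k\<in>{1..n}. sc (cc k) (X2 ^ (p ^ (k * hh))) $ i $ j)
        = (\<Sum>k\<in>{1..n}. if j = p ^ (k * hh) \<and> i = 0 then 1 / of_nat p ^ (2 * k) else 0)"
      by (intro sum.cong refl) (auto simp add: X2p_nth cc_def)
    also have "\<dots> = (\<Sum>k\<in>{1..j}. if j = p ^ (k * hh) \<and> i = 0 then 1 / of_nat p ^ (2 * k) else 0)"
    proof (rule sum_ext_zero[symmetric])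
      fix k assume "k \<in> {1..n} - {1..j}"
      then have "j < k" by auto
      then have "j \<noteq> p ^ (k * hh)" using k_lt_pow[of k] by simp
      then show "(if j = p ^ (k * hh) \<and> i = 0 then 1 / of_nat p ^ (2 * k) else 0) = (0::rat)" by simp
    qed (use n in auto)
    finally show ?thesis by simp
  qed
  have s2: "(\<Sum>k\<in>{0..i}. if j = 0 \<and> i = p ^ (h2 + k * hh) then 1 / of_nat p ^ (2 * k + 1) else 0)
      = (\<Sum>k\<in>{0..n}. sc (dd k) (X1 ^ (p ^ (h2 + k * hh))) $ i $ j)"
  proof -
    have "(\<Sum>k\<in>{0..n}. sc (dd k) (X1 ^ (p ^ (h2 + k * hh))) $ i $ j)
        = (\<Sum>k\<in>{0..n}. if j = 0 \<and> i = p ^ (h2 + k * hh) then 1 / of_nat p ^ (2 * k + 1) else 0)"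
      by (intro sum.cong refl) (auto simp add: X1p_nth dd_def)
    also have "\<dots> = (\<Sum>k\<in>{0..i}. if j = 0 \<and> i = p ^ (h2 + k * hh) then 1 / of_nat p ^ (2 * k + 1) else 0)"
    proof (rule sum_ext_zero[symmetric])
      fix k assume "k \<in> {0..n} - {0..i}"
      then have "i < k" by auto
      then have "i \<noteq> p ^ (h2 + k * hh)" using k_lt_pow'[of k h2] by simp
      then show "(if j = 0 \<and> i = p ^ (h2 + k * hh) then 1 / of_nat p ^ (2 * k + 1) else 0) = (0::rat)" by simp
    qed (use n in auto)
    finally show ?thesis by simp
  qed
  show ?thesis
    unfolding L2R_def emb_nth LT_L2_def Let_def N2n_def fps_add_nth fps_sum_nth s1 s2
    by (simp add: X2_nth)
qed

lemma pint_pow_ratio: "s \<le> t \<Longrightarrow> pint (1 / of_nat p ^ s * of_nat p ^ t)"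
proof -
  assume "s \<le> t"
  then have "1 / of_nat p ^ s * of_nat p ^ t = (of_nat (p ^ (t - s)) :: rat)"
    using p_nz by (simp add: field_simps flip: power_add)
  then show ?thesis by (simp only:) (rule pint_of_nat)
qed

lemma Wpt_X1: assumes "t \<ge> 1" "pint (c * of_nat p ^ t)" shows "Wpt ((sc c (X1 ^ (p ^ t))) $ i $ j) i j"
  using assms unfolding Wpt_def by (auto simp: X1p_nth)
lemma Wpt_X2: assumes "t \<ge> 1" "pint (c * of_nat p ^ t)" shows "Wpt ((sc c (X2 ^ (p ^ t))) $ i $ j) i j"
  using assms unfolding Wpt_def by (auto simp: X2p_nth)

lemma pint_cc: "k \<ge> 1 \<Longrightarrow> pint (cc k * of_nat p ^ (k * hh))"
  unfolding cc_def using hh_ge2 by (intro pint_pow_ratio) (simp add: mult.commute)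
lemma pint_dd: "pint (dd k * of_nat p ^ (m + k * hh))" if "m \<ge> 1"
proof -
  have "k * 2 \<le> k * hh" using hh_ge2 by simp
  then show ?thesis unfolding dd_def using that by (intro pint_pow_ratio) linarith
qed

lemma Wpt_N1n: "Wpt (N1n n $ i $ j) i j"
  unfolding N1n_def fps_add_nth fps_sum_nth
proof (intro Wpt_add Wpt_sum)
  fix k assume "k \<in> {1..n}"
  then show "Wpt (sc (cc k) (X1 ^ p ^ (k * hh)) $ i $ j) i j"
    using hh_ge2 by (intro Wpt_X1 pint_cc) auto
next
  fix k assume "k \<in> {0..n}"
  show "Wpt (sc (dd k) (X2 ^ p ^ (h1 + k * hh)) $ i $ j) i j"
    using h1 by (intro Wpt_X2 pint_dd) auto
qed

lemma Wpt_N2n: "Wpt (N2n n $ i $ j) i j"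
  unfolding N2n_def fps_add_nth fps_sum_nth
proof (intro Wpt_add Wpt_sum)
  fix k assume "k \<in> {1..n}"
  then show "Wpt (sc (cc k) (X2 ^ p ^ (k * hh)) $ i $ j) i j"
    using hh_ge2 by (intro Wpt_X2 pint_cc) auto
next
  fix k assume "k \<in> {0..n}"
  show "Wpt (sc (dd k) (X1 ^ p ^ (h2 + k * hh)) $ i $ j) i j"
    using h2 by (intro Wpt_X1 pint_dd) auto
qed

lemma N1R_nth: "N1R $ i $ j = N1n (i + j + 1) $ i $ j"
  unfolding N1R_def using L1_approx[of i j "i + j + 1"] by simp
lemma N2R_nth: "N2R $ i $ j = N2n (i + j + 1) $ i $ j"
  unfolding N2R_def using L2_approx[of i j "i + j + 1"] by simp

lemma W_N1R: "W N1R"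
  unfolding W_def N1R_nth by (intro allI Wpt_N1n)
lemma W_N2R: "W N2R"
  unfolding W_def N2R_nth by (intro allI Wpt_N2n)

lemma supp_N1R: "N1R $ a $ b \<noteq> 0 \<Longrightarrow> a + b \<ge> 2"
  using W_N1R Wpt_supp unfolding W_def by blast
lemma supp_N2R: "N2R $ a $ b \<noteq> 0 \<Longrightarrow> a + b \<ge> 2"
  using W_N2R Wpt_supp unfolding W_def by blast

lemma ld2_N1R: "ld 2 N1R"
  unfolding ld_def using supp_N1R by fastforce
lemma ld2_N2R: "ld 2 N2R"
  unfolding ld_def using supp_N2R by fastforce

lemma L1R_eq: "L1R = X1 + N1R" by (simp add: N1R_def)
lemma L2R_eq: "L2R = X2 + N2R" by (simp add: N2R_def)

lemma ld1_X1: "ld 1 X1" by (simp add: ld_def)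
lemma ld1_X2: "ld 1 X2" by (simp add: ld_def X2_nth)
lemma ld1_L1R: "ld 1 L1R"
  unfolding L1R_eq by (intro ld_add ld1_X1) (rule ld_mono[OF ld2_N1R], simp)
lemma ld1_L2R: "ld 1 L2R"
  unfolding L2R_eq by (intro ld_add ld1_X2) (rule ld_mono[OF ld2_N2R], simp)

lemma ld_X1p: "n \<le> e \<Longrightarrow> ld n (X1 ^ e)" by (auto simp: ld_def X1p_nth)
lemma ld_X2p: "n \<le> e \<Longrightarrow> ld n (X2 ^ e)" by (auto simp: ld_def X2p_nth)

lemma ld1_Phi1: "ld 1 Phi1" unfolding Phi1_def using p_gt1 by (intro ld_X2p) simp
lemma ld1_Phi2: "ld 1 Phi2" unfolding Phi2_def using p_gt1 by (intro ld_X1p) simp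
lemma ld2_Phi1: "ld 2 Phi1" unfolding Phi1_def using p_pow_ge2[of h1] h1 by (intro ld_X2p) simp
lemma ld2_Phi2: "ld 2 Phi2" unfolding Phi2_def using p_pow_ge2[of h2] h2 by (intro ld_X1p) simp

lemma cmp_X1p: "ld 1 A \<Longrightarrow> ld 1 B \<Longrightarrow> cmp (X1 ^ e) A B = A ^ e"
  using cmp_mono[of A B e 0] by simp
lemma cmp_X2p: "ld 1 A \<Longrightarrow> ld 1 B \<Longrightarrow> cmp (X2 ^ e) A B = B ^ e"
  using cmp_mono[of A B 0 e] by simp

lemma cmp_A1: "cmp (X1 + N1n n) Phi1 Phi2 = Phi1 + (\<Sum>k\<in>{1..n}. sc (cc k) (Phi1 ^ (p ^ (k * hh)))) + (\<Sum>k\<in>{0..n}. sc (dd k) (Phi2 ^ (p ^ (h1 + k * hh))))"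
  unfolding N1n_def using ld1_Phi1 ld1_Phi2
  by (simp add: cmp_add cmp_sum cmp_sc cmp_X1p cmp_X2p cmp_X1 add.assoc)
lemma cmp_A2: "cmp (X2 + N2n n) Phi1 Phi2 = Phi2 + (\<Sum>k\<in>{1..n}. sc (cc k) (Phi2 ^ (p ^ (k * hh)))) + (\<Sum>k\<in>{0..n}. sc (dd k) (Phi1 ^ (p ^ (h2 + k * hh))))"
  unfolding N2n_def using ld1_Phi1 ld1_Phi2
  by (simp add: cmp_add cmp_sum cmp_sc cmp_X1p cmp_X2p cmp_X2 add.assoc)

lemma alg1: "sc (of_nat p) (X1 + N1n n) = sc (of_nat p) X1 + cmp (X1 + N1n n) Phi1 Phi2 - sc (dd n) (X1 ^ (p ^ (Suc n * hh)))"
  unfolding cmp_A1 unfolding N1n_def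
  by (rule alg_identity[where Z = X2 and a = h1 and b = h2]) (auto simp: Phi1_def Phi2_def cd_props)
lemma alg2: "sc (of_nat p) (X2 + N2n n) = sc (of_nat p) X2 + cmp (X2 + N2n n) Phi1 Phi2 - sc (dd n) (X2 ^ (p ^ (Suc n * hh)))"
  unfolding cmp_A2 unfolding N2n_def
  by (rule alg_identity[where Z = X1 and a = h2 and b = h1]) (auto simp: Phi1_def Phi2_def cd_props)

lemma F7_gen:
  assumes approx: "\<And>i j. i + j < n \<Longrightarrow> L $ i $ j = A $ i $ j"
    and alg: "sc (of_nat p) A = sc (of_nat p) Y + cmp A Phi1 Phi2 - sc (dd n) (Y ^ e)"
    and Ye: "ld n (Y ^ e)"
  shows "ld n (sc (of_nat p) L - (sc (of_nat p) Y + cmp L Phi1 Phi2))"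
proof -
  have d: "ld n (L - A)" using approx by (auto simp: ld_def)
  have c: "ld n (cmp L Phi1 Phi2 - cmp A Phi1 Phi2)"
    by (rule cmp_cont[OF ld1_Phi1 ld1_Phi2 d])
  have eq: "sc (of_nat p) L - (sc (of_nat p) Y + cmp L Phi1 Phi2)
      = sc (of_nat p) (L - A) - sc (dd n) (Y ^ e) - (cmp L Phi1 Phi2 - cmp A Phi1 Phi2)"
  proof -
    have "sc (of_nat p) L = sc (of_nat p) (L - A) + sc (of_nat p) A" by (simp add: sc_def algebra_simps)
    then show ?thesis unfolding alg by (simp add: algebra_simps)
  qed
  show ?thesis unfolding eq
    by (intro ld_diff ld_sc d Ye c)
qed

lemma F7_1: "sc (of_nat p) L1R = sc (of_nat p) X1 + cmp L1R Phi1 Phi2"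
proof (rule ld_eq)
  fix n
  have "n \<le> p ^ (Suc n * hh)" using k_lt_pow[of "Suc n"] by simp
  then show "ld n (sc (of_nat p) L1R - (sc (of_nat p) X1 + cmp L1R Phi1 Phi2))"
    by (intro F7_gen[OF L1_approx alg1] ld_X1p)
qed
lemma F7_2: "sc (of_nat p) L2R = sc (of_nat p) X2 + cmp L2R Phi1 Phi2"
proof (rule ld_eq)
  fix n
  have "n \<le> p ^ (Suc n * hh)" using k_lt_pow[of "Suc n"] by simp
  then show "ld n (sc (of_nat p) L2R - (sc (of_nat p) X2 + cmp L2R Phi1 Phi2))"
    by (intro F7_gen[OF L2_approx alg2] ld_X2p)
qed

end


context LTc
begin

lemma ld_Suc0_iff[simp]: "ld (Suc 0) F \<longleftrightarrow> F $ 0 $ 0 = 0"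
  using ld_1_iff[of F] by simp

lemma sc_add_same: "sc a F + sc b F = sc (a + b) F"
  by (simp add: sc_def algebra_simps flip: fps_const_add)
lemma sc_one: "sc 1 F = F" by (simp add: sc_def)

lemma N1R_00: "N1R $ 0 $ 0 = 0" using ld2_N1R by (simp add: ld_def)
lemma N2R_00: "N2R $ 0 $ 0 = 0" using ld2_N2R by (simp add: ld_def)

lemma cmp_L1R: "ld 1 A \<Longrightarrow> ld 1 B \<Longrightarrow> cmp L1R A B = A + cmp N1R A B"
  unfolding L1R_eq by (simp add: cmp_add cmp_X1)
lemma cmp_L2R: "ld 1 A \<Longrightarrow> ld 1 B \<Longrightarrow> cmp L2R A B = B + cmp N2R A B"
  unfolding L2R_eq by (simp add: cmp_add cmp_X2)

primrec itr :: "nat \<Rightarrow> R \<times> R" where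
  "itr 0 = (0, 0)"
| "itr (Suc k) = (X1 - cmp N1R (fst (itr k)) (snd (itr k)), X2 - cmp N2R (fst (itr k)) (snd (itr k)))"

lemma itr_ld1: "ld 1 (fst (itr k)) \<and> ld 1 (snd (itr k))"
proof (cases k)
  case 0 then show ?thesis by simp
next
  case (Suc m)
  have "ld 1 (cmp N1R (fst (itr m)) (snd (itr m)))" "ld 1 (cmp N2R (fst (itr m)) (snd (itr m)))"
    by (simp_all add: cmp_00 N1R_00 N2R_00)
  then show ?thesis using Suc by (simp add: cmp_00 X2_nth)
qed

lemma itr_step: "ld k (fst (itr k) - fst (itr (Suc k))) \<and> ld k (snd (itr k) - snd (itr (Suc k)))"
proof (induction k)
  case 0 then show ?case by simp
next
  case (Suc k)
  let ?A = "itr (Suc k)" and ?B = "itr k"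
  have l: "ld 1 (fst ?A)" "ld 1 (snd ?A)" "ld 1 (fst ?B)" "ld 1 (snd ?B)" using itr_ld1 by blast+
  have d: "ld k (fst ?A - fst ?B)" "ld k (snd ?A - snd ?B)" using Suc by (auto intro: ld_sym)
  have "ld (k + 1) (cmp N1R (fst ?A) (snd ?A) - cmp N1R (fst ?B) (snd ?B))"
    by (rule cmp_N[OF d l supp_N1R])
  moreover have "ld (k + 1) (cmp N2R (fst ?A) (snd ?A) - cmp N2R (fst ?B) (snd ?B))"
    by (rule cmp_N[OF d l supp_N2R])
  ultimately show ?case by simp
qed

lemma itr_chain:
  assumes "k \<le> m"
  shows "ld k (fst (itr k) - fst (itr m)) \<and> ld k (snd (itr k) - snd (itr m))"
  using assms
proof (induction m rule: dec_induct)
  case base then show ?case by simp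
next
  case (step m)
  have "ld k (fst (itr m) - fst (itr (Suc m)))" "ld k (snd (itr m) - snd (itr (Suc m)))"
    using itr_step[of m] step(1) by (auto elim: ld_mono)
  then show ?case using step(3) by (auto intro: ld_trans)
qed

definition M1 :: R where "M1 = Abs_fps (\<lambda>i. Abs_fps (\<lambda>j. fst (itr (i + j + 1)) $ i $ j))"
definition M2 :: R where "M2 = Abs_fps (\<lambda>i. Abs_fps (\<lambda>j. snd (itr (i + j + 1)) $ i $ j))"

lemma M_approx: "ld k (M1 - fst (itr k)) \<and> ld k (M2 - snd (itr k))"
proof -
  have "M1 $ i $ j = fst (itr k) $ i $ j \<and> M2 $ i $ j = snd (itr k) $ i $ j" if "i + j < k" for i j
  proof -
    have "ld (i + j + 1) (fst (itr (i + j + 1)) - fst (itr k)) \<and> ld (i + j + 1) (snd (itr (i + j + 1)) - snd (itr k))"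
      using that by (intro itr_chain) simp
    then show ?thesis by (simp add: M1_def M2_def ld_def)
  qed
  then show ?thesis by (simp add: ld_def)
qed

lemma M_ld1: "ld 1 M1" "ld 1 M2"
  using itr_ld1[of 1] unfolding ld_def M1_def M2_def by auto

lemma M_inv: "cmp L1R M1 M2 = X1 \<and> cmp L2R M1 M2 = X2"
proof -
  have "ld k (cmp L1R M1 M2 - X1) \<and> ld k (cmp L2R M1 M2 - X2)" for k
  proof -
    let ?B = "itr k"
    have l: "ld 1 M1" "ld 1 M2" "ld 1 (fst ?B)" "ld 1 (snd ?B)" using itr_ld1 M_ld1 by auto
    have d: "ld k (M1 - fst ?B)" "ld k (M2 - snd ?B)" using M_approx by auto
    have n1: "ld (k + 1) (cmp N1R M1 M2 - cmp N1R (fst ?B) (snd ?B))"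
      by (rule cmp_N[OF d l supp_N1R])
    have n2: "ld (k + 1) (cmp N2R M1 M2 - cmp N2R (fst ?B) (snd ?B))"
      by (rule cmp_N[OF d l supp_N2R])
    have a: "ld (k + 1) (M1 - fst (itr (Suc k)))" "ld (k + 1) (M2 - snd (itr (Suc k)))"
      using M_approx[of "Suc k"] by auto
    have e1: "cmp L1R M1 M2 - X1 = (M1 - fst (itr (Suc k))) + (cmp N1R M1 M2 - cmp N1R (fst ?B) (snd ?B))"
      using l by (simp add: cmp_L1R)
    have e2: "cmp L2R M1 M2 - X2 = (M2 - snd (itr (Suc k))) + (cmp N2R M1 M2 - cmp N2R (fst ?B) (snd ?B))"
      using l by (simp add: cmp_L2R)
    have "ld (k + 1) (cmp L1R M1 M2 - X1)"
      unfolding e1 by (rule ld_add[OF a(1) n1])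
    moreover have "ld (k + 1) (cmp L2R M1 M2 - X2)"
      unfolding e2 by (rule ld_add[OF a(2) n2])
    ultimately show ?thesis by (meson ld_mono le_add1)
  qed
  then show ?thesis by (auto intro: ld_eq)
qed

lemma uniq:
  assumes l: "ld 1 A1" "ld 1 A2" "ld 1 B1" "ld 1 B2"
    and e: "cmp L1R A1 A2 = cmp L1R B1 B2" "cmp L2R A1 A2 = cmp L2R B1 B2"
  shows "A1 = B1 \<and> A2 = B2"
proof -
  have "ld k (A1 - B1) \<and> ld k (A2 - B2)" for k
  proof (induction k)
    case 0 then show ?case by simp
  next
    case (Suc k)
    have d: "ld k (B1 - A1)" "ld k (B2 - A2)" using Suc by (auto intro: ld_sym)
    have n1: "ld (k + 1) (cmp N1R B1 B2 - cmp N1R A1 A2)"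
      by (rule cmp_N[OF d l(3,4,1,2) supp_N1R])
    have n2: "ld (k + 1) (cmp N2R B1 B2 - cmp N2R A1 A2)"
      by (rule cmp_N[OF d l(3,4,1,2) supp_N2R])
    have "A1 - B1 = cmp N1R B1 B2 - cmp N1R A1 A2"
      using e(1) l by (simp add: cmp_L1R algebra_simps)
    moreover have "A2 - B2 = cmp N2R B1 B2 - cmp N2R A1 A2"
      using e(2) l by (simp add: cmp_L2R algebra_simps)
    ultimately show ?case using n1 n2 by simp
  qed
  then show ?thesis by (auto intro: ld_eq)
qed

lemma Linv_eq: "LT_Linv p h1 h2 = (c2 M1, c2 M2)"
  unfolding LT_Linv_def
proof (rule the_equality)
  have "ps_comp (LT_L1 p h1 h2) (c2 M1) (c2 M2) = ps_X1"
    by (rule emb_inj) (simp add: M_inv flip: L1R_def)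
  moreover have "ps_comp (LT_L2 p h1 h2) (c2 M1) (c2 M2) = ps_X2"
    by (rule emb_inj) (simp add: M_inv flip: L2R_def)
  moreover have "M1 $ 0 $ 0 = 0" "M2 $ 0 $ 0 = 0" using M_ld1 by (auto simp: ld_def)
  ultimately show "fst (c2 M1, c2 M2) 0 0 = 0 \<and> snd (c2 M1, c2 M2) 0 0 = 0 \<and> pp_comp (LT_L p h1 h2) (c2 M1, c2 M2) = pp_X"
    by (simp add: pp_comp_def LT_L_def pp_X_def c2_def)
next
  fix M assume M: "fst M 0 0 = 0 \<and> snd M 0 0 = 0 \<and> pp_comp (LT_L p h1 h2) M = pp_X"
  then have "ps_comp (LT_L1 p h1 h2) (fst M) (snd M) = ps_X1" "ps_comp (LT_L2 p h1 h2) (fst M) (snd M) = ps_X2"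
    by (auto simp: pp_comp_def LT_L_def pp_X_def)
  then have "cmp L1R (emb (fst M)) (emb (snd M)) = X1" "cmp L2R (emb (fst M)) (emb (snd M)) = X2"
    by (metis L1R_def emb_ps_comp emb_ps_X1, metis L2R_def emb_ps_comp emb_ps_X2)
  moreover have "ld 1 (emb (fst M))" "ld 1 (emb (snd M))" using M by (auto simp: ld_def)
  ultimately have "emb (fst M) = M1 \<and> emb (snd M) = M2"
    using M_inv M_ld1 by (intro uniq) auto
  then show "M = (c2 M1, c2 M2)"
    by (metis c2_emb prod.collapse)
qed

definition EE :: "ps2pair \<Rightarrow> R \<times> R" where "EE P = (emb (fst P), emb (snd P))"

lemma EE_LT_F:
  "EE (LT_F p h1 h2 A B) =
    (let S1 = cmp L1R (emb (fst A)) (emb (snd A)) + cmp L1R (emb (fst B)) (emb (snd B));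
         S2 = cmp L2R (emb (fst A)) (emb (snd A)) + cmp L2R (emb (fst B)) (emb (snd B))
     in (cmp M1 S1 S2, cmp M2 S1 S2))"
  by (simp add: EE_def LT_F_def pp_comp_def pp_add_def Linv_eq LT_L_def Let_def L1R_def L2R_def)

lemma sc_SucSuc: "F + sc (of_nat (Suc k)) F = sc (of_nat (Suc (Suc k))) F"
  unfolding of_nat_Suc[of "Suc k"] sc_add_same[symmetric] sc_one ..

lemma mult_k:
  "ld 1 (fst (EE (LT_mult p h1 h2 (Suc k)))) \<and> ld 1 (snd (EE (LT_mult p h1 h2 (Suc k))))
   \<and> cmp L1R (fst (EE (LT_mult p h1 h2 (Suc k)))) (snd (EE (LT_mult p h1 h2 (Suc k)))) = sc (of_nat (Suc k)) L1R
   \<and> cmp L2R (fst (EE (LT_mult p h1 h2 (Suc k)))) (snd (EE (LT_mult p h1 h2 (Suc k)))) = sc (of_nat (Suc k)) L2R"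
proof (induction k)
  case 0
  have "EE (LT_mult p h1 h2 (Suc 0)) = (X1, X2)" by (simp add: EE_def pp_X_def)
  then show ?case using ld1_X1 ld1_X2 by (simp add: cmp_id sc_def)
next
  case (Suc k)
  let ?G = "EE (LT_mult p h1 h2 (Suc k))"
  define S1 where "S1 = L1R + sc (of_nat (Suc k)) L1R"
  define S2 where "S2 = L2R + sc (of_nat (Suc k)) L2R"
  have G: "ld 1 (fst ?G)" "ld 1 (snd ?G)" using Suc by auto
  have "EE pp_X = (X1, X2)" by (simp add: EE_def pp_X_def)
  then have e: "EE (LT_mult p h1 h2 (Suc (Suc k))) = (cmp M1 S1 S2, cmp M2 S1 S2)"
    using Suc EE_LT_F[of pp_X "LT_mult p h1 h2 (Suc k)"]
    by (simp only: EE_def S1_def S2_def Let_def LT_mult.simps prod.sel) (simp add: cmp_id)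
  have S: "ld 1 S1" "ld 1 S2" unfolding S1_def S2_def using ld1_L1R ld1_L2R by (auto intro: ld_sc ld_add)
  have "cmp L1R (cmp M1 S1 S2) (cmp M2 S1 S2) = cmp (cmp L1R M1 M2) S1 S2"
    by (rule cmp_assoc[OF M_ld1 S, symmetric])
  also have "\<dots> = S1" using M_inv S by (simp add: cmp_X1)
  finally have 1: "cmp L1R (cmp M1 S1 S2) (cmp M2 S1 S2) = S1" .
  have "cmp L2R (cmp M1 S1 S2) (cmp M2 S1 S2) = cmp (cmp L2R M1 M2) S1 S2"
    by (rule cmp_assoc[OF M_ld1 S, symmetric])
  also have "\<dots> = S2" using M_inv S by (simp add: cmp_X2)
  finally have 2: "cmp L2R (cmp M1 S1 S2) (cmp M2 S1 S2) = S2" .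
  have 3: "ld 1 (cmp M1 S1 S2)" "ld 1 (cmp M2 S1 S2)"
    using M_ld1 unfolding ld_1_iff by (simp_all add: cmp_00)
  show ?case unfolding e using 1 2 3 by (simp only: S1_def S2_def sc_SucSuc prod.sel)
qed

definition trunc :: "nat \<Rightarrow> R \<Rightarrow> R" where
  "trunc n F = Abs_fps (\<lambda>i. Abs_fps (\<lambda>j. if i + j < n then F $ i $ j else 0))"

lemma trunc_nth: "trunc n F $ i $ j = (if i + j < n then F $ i $ j else 0)"
  by (simp add: trunc_def)
lemma trunc_ld: "ld n (F - trunc n F)" by (simp add: ld_def trunc_nth)
lemma trunc_ld1: "ld 1 F \<Longrightarrow> ld 1 (trunc n F)" by (simp add: ld_def trunc_nth)
lemma trunc_cg: "cg t F \<Longrightarrow> cg t (trunc n F)" by (simp add: cg_def trunc_nth)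
lemma trunc_diff: "trunc n F - trunc n G = trunc n (F - G)"
  by (rule R_eqI) (simp add: trunc_nth)

lemma cg0_Phi: "cg 0 Phi1" "cg 0 Phi2" by (simp_all add: Phi1_def Phi2_def cg_X1p cg_X2p)

lemma main_cong:
  assumes G: "ld 1 G1" "ld 1 G2"
    and E1: "cmp L1R G1 G2 = sc (of_nat p) X1 + cmp L1R Phi1 Phi2"
    and E2: "cmp L2R G1 G2 = sc (of_nat p) X2 + cmp L2R Phi1 Phi2"
  shows "cg 1 (G1 - Phi1) \<and> cg 1 (G2 - Phi2)"
proof -
  have D1: "G1 - Phi1 = sc (of_nat p) X1 + cmp N1R Phi1 Phi2 - cmp N1R G1 G2"
    using E1 G ld1_Phi1 ld1_Phi2 by (simp add: cmp_L1R algebra_simps)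
  have D2: "G2 - Phi2 = sc (of_nat p) X2 + cmp N2R Phi1 Phi2 - cmp N2R G1 G2"
    using E2 G ld1_Phi1 ld1_Phi2 by (simp add: cmp_L2R algebra_simps)
  have "\<forall>i j. i + j < n \<longrightarrow> pdv 1 ((G1 - Phi1) $ i $ j) \<and> pdv 1 ((G2 - Phi2) $ i $ j)" for n
  proof (induction n)
    case 0 then show ?case by simp
  next
    case (Suc n)
    define T1 where "T1 = trunc n G1"
    define T2 where "T2 = trunc n G2"
    define S1 where "S1 = trunc n Phi1"
    define S2 where "S2 = trunc n Phi2"
    have TS1: "cg 1 (T1 - S1)" unfolding T1_def S1_def trunc_diff cg_def trunc_nth using Suc by auto
    have TS2: "cg 1 (T2 - S2)" unfolding T2_def S2_def trunc_diff cg_def trunc_nth using Suc by auto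
    have S: "cg 0 S1" "cg 0 S2" unfolding S1_def S2_def using cg0_Phi by (auto intro: trunc_cg)
    have T: "cg 0 T1" "cg 0 T2"
    proof -
      have "T1 = S1 + (T1 - S1)" "T2 = S2 + (T2 - S2)" by simp_all
      then show "cg 0 T1" "cg 0 T2" using S TS1 TS2 by (metis cg_add cg_mono zero_le_one)+
    qed
    have lS: "ld 1 S1" "ld 1 S2" unfolding S1_def S2_def by (rule trunc_ld1[OF ld1_Phi1], rule trunc_ld1[OF ld1_Phi2])
    have lT: "ld 1 T1" "ld 1 T2" unfolding T1_def T2_def by (rule trunc_ld1[OF G(1)], rule trunc_ld1[OF G(2)])
    have M1': "cg 1 (cmp N1R S1 S2 - cmp N1R T1 T2)"
      by (rule lemM[OF W_N1R S lS T lT]) (use TS1 TS2 in \<open>auto intro: cg_uminus[of 1 "T1 - S1", simplified] cg_uminus[of 1 "T2 - S2", simplified]\<close>)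
    have M2': "cg 1 (cmp N2R S1 S2 - cmp N2R T1 T2)"
      by (rule lemM[OF W_N2R S lS T lT]) (use TS1 TS2 in \<open>auto intro: cg_uminus[of 1 "T1 - S1", simplified] cg_uminus[of 1 "T2 - S2", simplified]\<close>)
    have dG: "ld n (G1 - T1)" "ld n (G2 - T2)" unfolding T1_def T2_def by (rule trunc_ld)+
    have dP: "ld n (Phi1 - S1)" "ld n (Phi2 - S2)" unfolding S1_def S2_def by (rule trunc_ld)+
    have aG1: "ld (n + 1) (cmp N1R G1 G2 - cmp N1R T1 T2)" by (rule cmp_N[OF dG G lT supp_N1R])
    have aG2: "ld (n + 1) (cmp N2R G1 G2 - cmp N2R T1 T2)" by (rule cmp_N[OF dG G lT supp_N2R])
    have aP1: "ld (n + 1) (cmp N1R Phi1 Phi2 - cmp N1R S1 S2)" by (rule cmp_N[OF dP ld1_Phi1 ld1_Phi2 lS supp_N1R])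
    have aP2: "ld (n + 1) (cmp N2R Phi1 Phi2 - cmp N2R S1 S2)" by (rule cmp_N[OF dP ld1_Phi1 ld1_Phi2 lS supp_N2R])
    have px: "pdv 1 ((sc (of_nat p) X1) $ i $ j)" "pdv 1 ((sc (of_nat p) X2) $ i $ j)" for i j
    proof -
      have "pint (X1 $ i $ j)" "pint (X2 $ i $ j)" by (simp_all add: X1_nth X2_nth)
      then show "pdv 1 ((sc (of_nat p) X1) $ i $ j)" "pdv 1 ((sc (of_nat p) X2) $ i $ j)"
        unfolding pdv_def sc_nth using p_nz by simp_all
    qed
    show ?case
    proof (intro allI impI)
      fix i j assume ij: "i + j < Suc n"
      have e1: "(G1 - Phi1) $ i $ j = (sc (of_nat p) X1) $ i $ j + (cmp N1R S1 S2 - cmp N1R T1 T2) $ i $ j"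
        using aG1 aP1 ij unfolding D1 ld_def by auto
      have e2: "(G2 - Phi2) $ i $ j = (sc (of_nat p) X2) $ i $ j + (cmp N2R S1 S2 - cmp N2R T1 T2) $ i $ j"
        using aG2 aP2 ij unfolding D2 ld_def by auto
      show "pdv 1 ((G1 - Phi1) $ i $ j) \<and> pdv 1 ((G2 - Phi2) $ i $ j)"
        unfolding e1 e2 using M1' M2' unfolding cg_def by (intro conjI pdv_add px) auto
    qed
  qed
  then show ?thesis unfolding cg_def by (meson less_add_one)
qed

end


theorem proposition3p6:
  fixes p h1 h2 :: nat
  assumes "prime p" and "h1 > 0" and "h2 > 0" and "coprime h1 h2"
  shows "pp_p_integral p (LT_mult p h1 h2 p)
    \<and> pp_cong_deg2 (LT_mult p h1 h2 p) (ps_smult (of_nat p) ps_X1, ps_smult (of_nat p) ps_X2)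
    \<and> pp_cong_mod_p p (LT_mult p h1 h2 p) (ps_pow ps_X2 (p ^ h1), ps_pow ps_X1 (p ^ h2))
    \<and> LT_mult p h1 h2 p \<in> C_LT p h1 h2"
proof -
  interpret LTc p h1 h2 using assms by unfold_locales auto
  obtain k where pk: "p = Suc k" using p_gt1 by (cases p) auto
  define G1 where "G1 = emb (fst (LT_mult p h1 h2 p))"
  define G2 where "G2 = emb (snd (LT_mult p h1 h2 p))"
  have mk: "ld 1 G1" "ld 1 G2" "cmp L1R G1 G2 = sc (of_nat p) L1R" "cmp L2R G1 G2 = sc (of_nat p) L2R"
    using mult_k[of k] unfolding G1_def G2_def EE_def pk by auto
  have E1: "cmp L1R G1 G2 = sc (of_nat p) X1 + cmp L1R Phi1 Phi2" using mk F7_1 by simp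
  have E2: "cmp L2R G1 G2 = sc (of_nat p) X2 + cmp L2R Phi1 Phi2" using mk F7_2 by simp
  have cgD: "cg 1 (G1 - Phi1)" "cg 1 (G2 - Phi2)" using main_cong[OF mk(1,2) E1 E2] by auto
  have cgG: "cg 0 G1" "cg 0 G2"
  proof -
    have "G1 = Phi1 + (G1 - Phi1)" "G2 = Phi2 + (G2 - Phi2)" by simp_all
    then show "cg 0 G1" "cg 0 G2" using cg0_Phi cgD by (metis cg_add cg_mono zero_le_one)+
  qed
  have lin1: "ld 2 (G1 - sc (of_nat p) X1)"
  proof -
    have "G1 - sc (of_nat p) X1 = Phi1 + cmp N1R Phi1 Phi2 - cmp N1R G1 G2"
      using E1 mk ld1_Phi1 ld1_Phi2 by (simp add: cmp_L1R algebra_simps)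
    moreover have "ld 2 (cmp N1R Phi1 Phi2)" by (rule cmp_ld[OF ld1_Phi1 ld1_Phi2 ld2_N1R])
    moreover have "ld 2 (cmp N1R G1 G2)" by (rule cmp_ld[OF mk(1,2) ld2_N1R])
    ultimately show ?thesis using ld2_Phi1 by (simp add: ld_add ld_diff)
  qed
  have lin2: "ld 2 (G2 - sc (of_nat p) X2)"
  proof -
    have "G2 - sc (of_nat p) X2 = Phi2 + cmp N2R Phi1 Phi2 - cmp N2R G1 G2"
      using E2 mk ld1_Phi1 ld1_Phi2 by (simp add: cmp_L2R algebra_simps)
    moreover have "ld 2 (cmp N2R Phi1 Phi2)" by (rule cmp_ld[OF ld1_Phi1 ld1_Phi2 ld2_N2R])
    moreover have "ld 2 (cmp N2R G1 G2)" by (rule cmp_ld[OF mk(1,2) ld2_N2R])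
    ultimately show ?thesis using ld2_Phi2 by (simp add: ld_add ld_diff)
  qed
  have f1: "fst (LT_mult p h1 h2 p) i j = G1 $ i $ j" for i j by (simp add: G1_def)
  have f2: "snd (LT_mult p h1 h2 p) i j = G2 $ i $ j" for i j by (simp add: G2_def)
  have A: "pp_p_integral p (LT_mult p h1 h2 p)"
    using cgG unfolding pp_p_integral_def ps_p_integral_def f1 f2 cg_def pdv_0_iff by auto
  have B: "pp_cong_deg2 (LT_mult p h1 h2 p) (ps_smult (of_nat p) ps_X1, ps_smult (of_nat p) ps_X2)"
  proof -
    have "ps_smult (of_nat p) ps_X1 i j = (sc (of_nat p) X1) $ i $ j"
         "ps_smult (of_nat p) ps_X2 i j = (sc (of_nat p) X2) $ i $ j" for i j
      by (metis emb_nth emb_ps_smult emb_ps_X1, metis emb_nth emb_ps_smult emb_ps_X2)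
    then show ?thesis using lin1 lin2 unfolding pp_cong_deg2_def f1 f2 ld_def by auto
  qed
  have C: "pp_cong_mod_p p (LT_mult p h1 h2 p) (ps_pow ps_X2 (p ^ h1), ps_pow ps_X1 (p ^ h2))"
  proof -
    have "ps_pow ps_X2 (p ^ h1) i j = Phi1 $ i $ j" "ps_pow ps_X1 (p ^ h2) i j = Phi2 $ i $ j" for i j
      by (metis emb_nth emb_ps_pow emb_ps_X2 Phi1_def, metis emb_nth emb_ps_pow emb_ps_X1 Phi2_def)
    then show ?thesis using cgD unfolding pp_cong_mod_p_def ps_cong_mod_p_def f1 f2 cg_def pdv_def by auto
  qed
  have D: "LT_mult p h1 h2 p \<in> C_LT p h1 h2"
    unfolding C_LT_def using A B C by blast
  show ?thesis using A B C D by blast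
qed


end
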